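(* Let $\mathcal{A}$ be a unital $*$-algebra (a unital $*$-subalgebra of $\mathcal{B}(\mathbf{h})$ for a Hilbert space $\mathbf{h}$), let $\mathcal{L}:\mathcal{A}\to\mathcal{A}$ be a conditionally completely positive map with $\mathcal{L}(1)=0$, and let $(M,\pi,\delta)$ be its canonical pre-Hilbert $\mathcal{A}$-$\mathcal{A}$ bimodule, left-action $*$-representation $\pi:\mathcal{A}\to\mathcal{B}^a(M)$ and bimodule derivation $\delta:\mathcal{A}\to M$, as described in the context. Let $E_{\mathcal{L}}=\mathcal{B}^a(\mathcal{A}\oplus M)$ with the $\mathcal{A}$-$\mathcal{A}$ bimodule structure $x.R=\tilde\pi(x)R$, $R.x=R\tilde\pi(x)$, where $\tilde\pi(x)=x\oplus\pi(x)$. If the second Hochschild cohomology $H^2(\mathcal{A},E_{\mathcal{L}})$ vanishes, then there exists a $*$-homomorphism $\beta:\mathcal{A}\to E_{\mathcal{L}}[[t]]$ which, writing $h=t^2$ (so $h^{\frac{2n-1}{2}}=t^{2n-1}$) and $$\beta(x)=\begin{pmatrix}\beta_{00}(h)(x) & \beta_{01}(h)(x)\\ \beta_{10}(h)(x) & \beta_{11}(h)(x)\end{pmatrix}$$ in the matrix decomposition of $E_{\mathcal{L}}$, has the form - $\beta_{00}(h)=\sum_{n\ge 0}h^n\theta_{00}^{(n)}$ with $\theta_{00}^{(0)}(x)=x$ and $\theta_{00}^{(1)}(x)=\mathcal{L}(x)$, - $\beta_{10}(h)=\sum_{n\ge 1}h^{\frac{2n-1}{2}}\theta_{10}^{(n)}$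 with $\theta_{10}^{(1)}(x)=\delta(x)$, - $\beta_{01}(h)=\sum_{n\ge 1}h^{\frac{2n-1}{2}}\theta_{01}^{(n)}$ with $\theta_{01}^{(1)}(x)=\delta^\dagger(x)$, - $\beta_{11}(h)=\sum_{n\ge 1}h^{n-1}\theta_{11}^{(n)}$ with $\theta_{11}^{(1)}(x)=\pi(x)$, for some linear maps $\theta_{\mu\nu}^{(n)}$ on $\mathcal{A}$.
   Context: A linear map $\mathcal{L}$ on $\mathcal{A}$ with $\mathcal{L}(1)=0$ that is conditionally completely positive admits a canonical (unique up to isomorphism) pre-Hilbert $\mathcal{A}$-$\mathcal{A}$ bimodule $M$ with $\mathcal{A}$-valued inner product $\langle\cdot,\cdot\rangle$, whose left action is given by a $*$-representation $\pi$ of $\mathcal{A}$ into the algebra $\mathcal{B}^a(M)$ of adjointable maps on $M$, together with a bimodule derivation $\delta:\mathcal{A}\to M$ (i.e. $\delta(xy)=\pi(x)\delta(y)+\delta(x)y$) such that $M$ is the right $\mathcal{A}$-linear span of $\delta(\mathcal{A})$ and $\mathcal{L}(xy)-x\mathcal{L}(y)-\mathcal{L}(x)y=\delta^\dagger(x)\delta(y)$ for all $x,y\in\mathcal{A}$. Here for a linear map $\psi$, $\psi^\dagger(x):=(\psi(x^* ))^*$, and an element $\xi\in M$ is identified with the adjoint map $\xi^*=\langle\xi|:M\to\mathcal{A}$, $\eta\mapsto\langle\xi,\eta\rangle$; $M^*=\{\xi^*:\xi\in M\}$. The $*$-algebra $E_{\mathcal{L}}=\mathcal{B}^a(\mathcal{A}\oplus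 M)$ (product = composition, $*$ = adjoint) is the direct sum of the complemented submodules $\mathcal{A}$, $M^*$, $M$, $\mathcal{B}^a(M)$, and each $X\in E_{\mathcal{L}}$ is written as a $2\times 2$ matrix whose $(0,0)$ entry lies in $\mathcal{A}$, $(0,1)$ entry in $M^*$, $(1,0)$ entry in $M$, and $(1,1)$ entry in $\mathcal{B}^a(M)$. $H^n(\mathcal{A},N)$ is the Hochschild cohomology of $\mathcal{A}$ with coefficients in the bimodule $N$: the cohomology of the complex $C^0=N$, $C^n$ = multilinear maps $\mathcal{A}^n\to N$, with the standard Hochschild coboundary $bf(a_1,\dots,a_{n+1})=a_1f(a_2,\dots,a_{n+1})+\sum_{i=1}^{n}(-1)^i f(a_1,\dots,a_ia_{i+1},\dots,a_{n+1})+(-1)^{n+1}f(a_1,\dots,a_n)a_{n+1}$. For a $*$-algebra $\mathcal{C}$, $\mathcal{C}[[t]]$ denotes the $*$-algebra of formal power series in one indeterminate $t$ with coefficients in $\mathcal{C}$; a $*$-homomorphism $\beta:\mathcal{A}\to E_{\mathcal{L}}[[t]]$ means $\beta(xy)=\beta(x)\beta(y)$ and $\beta(x^* )=\beta(x)^*$. *)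

theory Defs
  imports Complex_Main
begin

class cvec = ab_group_add +
  fixes scC :: "complex \<Rightarrow> 'a \<Rightarrow> 'a"
  assumes scC_add_right: "scC c (x + y) = scC c x + scC c y"
    and scC_add_left: "scC (c + d) x = scC c x + scC d x"
    and scC_scC: "scC c (scC d x) = scC (c * d) x"
    and scC_one: "scC 1 x = x"

class star_alg = ring_1 + cvec +
  fixes star :: "'a \<Rightarrow> 'a"
  assumes star_star: "star (star x) = x"
    and star_add: "star (x + y) = star x + star y"
    and star_mult: "star (x * y) = star y * star x"
    and star_scC: "star (scC c x) = scC (cnj c) (star x)"
    and scC_mult_left: "scC c x * y = scC c (x * y)"
    and scC_mult_right: "x * scC c y = scC c (x * y)"

class cinner_space = cvec +
  fixes cinner :: "'a \<Rightarrow> 'a \<Rightarrow> complex"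
  assumes cinner_sym: "cinner y x = cnj (cinner x y)"
    and cinner_add_right: "cinner x (y + z) = cinner x y + cinner x z"
    and cinner_scC_right: "cinner x (scC c y) = c * cinner x y"
    and cinner_nonneg: "Re (cinner x x) \<ge> 0"
    and cinner_definite: "cinner x x = 0 \<Longrightarrow> x = 0"

definition cnorm :: "'a::cinner_space \<Rightarrow> real" where
  "cnorm x = sqrt (Re (cinner x x))"

class chilbert = cinner_space +
  assumes cauchy_converges: "\<And>X :: nat \<Rightarrow> 'a.
    (\<forall>e::real>0. \<exists>N::nat. \<forall>m\<ge>N. \<forall>n\<ge>N. sqrt (Re (cinner (X m - X n) (X m - X n))) < e) \<Longrightarrow>
       (\<exists>l. \<forall>e::real>0. \<exists>N::nat. \<forall>n\<ge>N. sqrt (Re (cinner (X n - l) (X n - l))) < e)"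

definition clinear :: "('a::cvec \<Rightarrow> 'b::cvec) \<Rightarrow> bool" where
  "clinear f \<longleftrightarrow> (\<forall>x y. f (x + y) = f x + f y) \<and> (\<forall>c x. f (scC c x) = scC c (f x))"

definition bounded_clinear :: "('a::cinner_space \<Rightarrow> 'a) \<Rightarrow> bool" where
  "bounded_clinear T \<longleftrightarrow> clinear T \<and> (\<exists>K. \<forall>v. cnorm (T v) \<le> K * cnorm v)"

text \<open>\<open>rep\<close> realises the abstract unital *-algebra \<open>'a\<close> as a unital *-subalgebra of
  \<open>B(h)\<close>: an injective unital *-homomorphism into the bounded operators on \<open>h\<close>.\<close>
definition unital_star_subalg_of_Bh :: "('a::star_alg \<Rightarrow> 'h::chilbert \<Rightarrow> 'h) \<Rightarrow> bool" where
  "unital_star_subalg_of_Bh rep \<longleftrightarrow>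
     inj rep \<and> rep 1 = id \<and>
     (\<forall>x y. rep (x * y) = rep x \<circ> rep y) \<and>
     (\<forall>x y. rep (x + y) = (\<lambda>v. rep x v + rep y v)) \<and>
     (\<forall>c x. rep (scC c x) = (\<lambda>v. scC c (rep x v))) \<and>
     (\<forall>x. bounded_clinear (rep x)) \<and>
     (\<forall>x v w. cinner (rep x v) w = cinner v (rep (star x) w))"

definition posA :: "('a::star_alg \<Rightarrow> 'h::chilbert \<Rightarrow> 'h) \<Rightarrow> 'a \<Rightarrow> bool" where
  "posA rep x \<longleftrightarrow> (\<forall>v. cinner v (rep x v) \<in> \<real> \<and> Re (cinner v (rep x v)) \<ge> 0)"

definition ccp :: "('a::star_alg \<Rightarrow> 'h::chilbert \<Rightarrow> 'h) \<Rightarrow> ('a \<Rightarrow> 'a) \<Rightarrow> bool" where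
  "ccp rep L \<longleftrightarrow> (\<forall>x. L (star x) = star (L x)) \<and>
     (\<forall>(n::nat) (a::nat \<Rightarrow> 'a) b. (\<Sum>i<n. a i * b i) = 0 \<longrightarrow>
        posA rep (\<Sum>i<n. \<Sum>j<n. star (b i) * L (star (a i) * a j) * b j))"

definition pre_hilbert_module ::
  "('a::star_alg \<Rightarrow> 'h::chilbert \<Rightarrow> 'h) \<Rightarrow> ('m::cvec \<Rightarrow> 'a \<Rightarrow> 'm) \<Rightarrow> ('m \<Rightarrow> 'm \<Rightarrow> 'a) \<Rightarrow> bool" where
  "pre_hilbert_module rep ract ip \<longleftrightarrow>
     (\<forall>\<xi> a b. ract \<xi> (a * b) = ract (ract \<xi> a) b) \<and>
     (\<forall>\<xi>. ract \<xi> 1 = \<xi>) \<and>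
     (\<forall>\<xi> \<eta> a. ract (\<xi> + \<eta>) a = ract \<xi> a + ract \<eta> a) \<and>
     (\<forall>\<xi> a b. ract \<xi> (a + b) = ract \<xi> a + ract \<xi> b) \<and>
     (\<forall>c \<xi> a. ract (scC c \<xi>) a = scC c (ract \<xi> a)) \<and>
     (\<forall>c \<xi> a. ract \<xi> (scC c a) = scC c (ract \<xi> a)) \<and>
     (\<forall>\<xi> \<eta> \<zeta>. ip \<xi> (\<eta> + \<zeta>) = ip \<xi> \<eta> + ip \<xi> \<zeta>) \<and>
     (\<forall>\<xi> \<eta> c. ip \<xi> (scC c \<eta>) = scC c (ip \<xi> \<eta>)) \<and>
     (\<forall>\<xi> \<eta> a. ip \<xi> (ract \<eta> a) = ip \<xi> \<eta> * a) \<and>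
     (\<forall>\<xi> \<eta>. ip \<eta> \<xi> = star (ip \<xi> \<eta>)) \<and>
     (\<forall>\<xi>. posA rep (ip \<xi> \<xi>)) \<and>
     (\<forall>\<xi>. ip \<xi> \<xi> = 0 \<longrightarrow> \<xi> = 0)"

definition is_adjoint_of :: "('m \<Rightarrow> 'm \<Rightarrow> 'a) \<Rightarrow> ('m \<Rightarrow> 'm) \<Rightarrow> ('m \<Rightarrow> 'm) \<Rightarrow> bool" where
  "is_adjoint_of ip T S \<longleftrightarrow> (\<forall>\<xi> \<eta>. ip (T \<xi>) \<eta> = ip \<xi> (S \<eta>))"

definition Ba :: "('m \<Rightarrow> 'm \<Rightarrow> 'a) \<Rightarrow> ('m \<Rightarrow> 'm) set" where
  "Ba ip = {T. \<exists>S. is_adjoint_of ip T S}"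

definition canonical_triple ::
  "('a::star_alg \<Rightarrow> 'h::chilbert \<Rightarrow> 'h) \<Rightarrow> ('a \<Rightarrow> 'a) \<Rightarrow> ('m::cvec \<Rightarrow> 'a \<Rightarrow> 'm) \<Rightarrow>
   ('m \<Rightarrow> 'm \<Rightarrow> 'a) \<Rightarrow> ('a \<Rightarrow> 'm \<Rightarrow> 'm) \<Rightarrow> ('a \<Rightarrow> 'm) \<Rightarrow> bool" where
  "canonical_triple rep L ract ip \<pi> \<delta> \<longleftrightarrow>
     pre_hilbert_module rep ract ip \<and>
     \<comment> \<open>\<pi> is a unital *-representation of A in B^a(M)\<close>
     (\<forall>x. \<pi> x \<in> Ba ip \<and> is_adjoint_of ip (\<pi> x) (\<pi> (star x))) \<and>
     \<pi> 1 = id \<and>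
     (\<forall>x y. \<pi> (x * y) = \<pi> x \<circ> \<pi> y) \<and>
     (\<forall>x y. \<pi> (x + y) = (\<lambda>\<xi>. \<pi> x \<xi> + \<pi> y \<xi>)) \<and>
     (\<forall>c x. \<pi> (scC c x) = (\<lambda>\<xi>. scC c (\<pi> x \<xi>))) \<and>
     \<comment> \<open>bimodule compatibility of left and right actions\<close>
     (\<forall>x \<xi> a. \<pi> x (ract \<xi> a) = ract (\<pi> x \<xi>) a) \<and>
     \<comment> \<open>\<delta> is a linear bimodule derivation\<close>
     clinear \<delta> \<and>
     (\<forall>x y. \<delta> (x * y) = \<pi> x (\<delta> y) + ract (\<delta> x) y) \<and>
     \<comment> \<open>M is the right A-linear span of \<delta>(A)\<close>
     (\<forall>\<xi>. \<exists>(n::nat) xs ys. \<xi> = (\<Sum>i<n. ract (\<delta> (xs i)) (ys i))) \<and>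
     \<comment> \<open>L(xy) - xL(y) - L(x)y = \<delta>\<dagger>(x)\<delta>(y), with \<delta>\<dagger>(x) = \<delta>(x*)* = <\<delta>(x*)|\<close>
     (\<forall>x y. L (x * y) - x * L y - L x * y = ip (\<delta> (star x)) (\<delta> y))"

definition ipS :: "('m \<Rightarrow> 'm \<Rightarrow> 'a::star_alg) \<Rightarrow> 'a \<times> 'm \<Rightarrow> 'a \<times> 'm \<Rightarrow> 'a" where
  "ipS ip u v = star (fst u) * fst v + ip (snd u) (snd v)"

type_synonym ('a, 'm) op = "'a \<times> 'm \<Rightarrow> 'a \<times> 'm"

definition EL :: "('m \<Rightarrow> 'm \<Rightarrow> 'a::star_alg) \<Rightarrow> ('a, 'm) op set" where
  "EL ip = {X. \<exists>S. \<forall>u v. ipS ip (X u) v = ipS ip u (S v)}"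

definition adjE :: "('m \<Rightarrow> 'm \<Rightarrow> 'a::star_alg) \<Rightarrow> ('a, 'm) op \<Rightarrow> ('a, 'm) op" where
  "adjE ip X = (SOME S. \<forall>u v. ipS ip (X u) v = ipS ip u (S v))"

definition ezero :: "('a::star_alg, 'm::cvec) op" where
  "ezero = (\<lambda>u. (0, 0))"

definition eadd :: "('a::star_alg, 'm::cvec) op \<Rightarrow> ('a, 'm) op \<Rightarrow> ('a, 'm) op" where
  "eadd X Y = (\<lambda>u. (fst (X u) + fst (Y u), snd (X u) + snd (Y u)))"

definition ediff :: "('a::star_alg, 'm::cvec) op \<Rightarrow> ('a, 'm) op \<Rightarrow> ('a, 'm) op" where
  "ediff X Y = (\<lambda>u. (fst (X u) - fst (Y u), snd (X u) - snd (Y u)))"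

definition escale :: "complex \<Rightarrow> ('a::star_alg, 'm::cvec) op \<Rightarrow> ('a, 'm) op" where
  "escale c X = (\<lambda>u. (scC c (fst (X u)), scC c (snd (X u))))"

definition tpi :: "('a::star_alg \<Rightarrow> 'm \<Rightarrow> 'm) \<Rightarrow> 'a \<Rightarrow> ('a, 'm) op" where
  "tpi \<pi> x = (\<lambda>u. (x * fst u, \<pi> x (snd u)))"

definition lact :: "('a::star_alg \<Rightarrow> 'm \<Rightarrow> 'm) \<Rightarrow> 'a \<Rightarrow> ('a, 'm) op \<Rightarrow> ('a, 'm) op" where
  "lact \<pi> x R = tpi \<pi> x \<circ> R"

definition ract_E :: "('a::star_alg \<Rightarrow> 'm \<Rightarrow> 'm) \<Rightarrow> ('a, 'm) op \<Rightarrow> 'a \<Rightarrow> ('a, 'm) op" where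
  "ract_E \<pi> R x = R \<circ> tpi \<pi> x"

definition clinearE :: "('a::star_alg \<Rightarrow> ('a, 'm::cvec) op) \<Rightarrow> bool" where
  "clinearE g \<longleftrightarrow> (\<forall>x y. g (x + y) = eadd (g x) (g y)) \<and> (\<forall>c x. g (scC c x) = escale c (g x))"

definition hoch_b2 :: "('a::star_alg \<Rightarrow> 'm::cvec \<Rightarrow> 'm) \<Rightarrow> ('a \<Rightarrow> 'a \<Rightarrow> ('a, 'm) op) \<Rightarrow>
    'a \<Rightarrow> 'a \<Rightarrow> 'a \<Rightarrow> ('a, 'm) op" where
  "hoch_b2 \<pi> f a1 a2 a3 =
     ediff (eadd (ediff (lact \<pi> a1 (f a2 a3)) (f (a1 * a2) a3)) (f a1 (a2 * a3))) (ract_E \<pi> (f a1 a2) a3)"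

definition hoch_b1 :: "('a::star_alg \<Rightarrow> 'm::cvec \<Rightarrow> 'm) \<Rightarrow> ('a \<Rightarrow> ('a, 'm) op) \<Rightarrow>
    'a \<Rightarrow> 'a \<Rightarrow> ('a, 'm) op" where
  "hoch_b1 \<pi> g a1 a2 = eadd (ediff (lact \<pi> a1 (g a2)) (g (a1 * a2))) (ract_E \<pi> (g a1) a2)"

definition H2_vanishes :: "('m::cvec \<Rightarrow> 'm \<Rightarrow> 'a::star_alg) \<Rightarrow> ('a \<Rightarrow> 'm \<Rightarrow> 'm) \<Rightarrow> bool" where
  "H2_vanishes ip \<pi> \<longleftrightarrow>
     (\<forall>f :: 'a \<Rightarrow> 'a \<Rightarrow> ('a, 'm) op.
        (\<forall>x y. f x y \<in> EL ip) \<and> (\<forall>y. clinearE (\<lambda>x. f x y)) \<and> (\<forall>x. clinearE (f x)) \<and>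
        (\<forall>a1 a2 a3. hoch_b2 \<pi> f a1 a2 a3 = ezero)
        \<longrightarrow> (\<exists>g :: 'a \<Rightarrow> ('a, 'm) op. (\<forall>x. g x \<in> EL ip) \<and> clinearE g \<and>
               (\<forall>a1 a2. f a1 a2 = hoch_b1 \<pi> g a1 a2)))"

text \<open>A power series is its coefficient sequence; product is the Cauchy product
  (composition in \<open>E_L\<close>), \<open>*\<close> is the coefficientwise adjoint.\<close>
definition ps_mult :: "(nat \<Rightarrow> ('a::star_alg, 'm::cvec) op) \<Rightarrow> (nat \<Rightarrow> ('a, 'm) op) \<Rightarrow> nat \<Rightarrow> ('a, 'm) op" where
  "ps_mult P Q = (\<lambda>k u. ((\<Sum>i\<le>k. fst (P i (Q (k - i) u))), (\<Sum>i\<le>k. snd (P i (Q (k - i) u)))))"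

definition ps_star :: "('m \<Rightarrow> 'm \<Rightarrow> 'a::star_alg) \<Rightarrow> (nat \<Rightarrow> ('a, 'm) op) \<Rightarrow> nat \<Rightarrow> ('a, 'm) op" where
  "ps_star ip P = (\<lambda>k. adjE ip (P k))"

text \<open>Matrix entries of \<open>X \<in> B^a(A \<oplus> M)\<close>: (0,0) in \<open>A \<cong> B^a(A)\<close>, (1,0) in \<open>M \<cong> B^a(A,M)\<close>,
  (0,1) in \<open>M* \<subseteq> (M \<Rightarrow> A)\<close>, (1,1) in \<open>B^a(M)\<close>.\<close>
definition e00 :: "('a::star_alg, 'm::cvec) op \<Rightarrow> 'a" where "e00 X = fst (X (1, 0))"
definition e10 :: "('a::star_alg, 'm::cvec) op \<Rightarrow> 'm" where "e10 X = snd (X (1, 0))"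
definition e01 :: "('a::star_alg, 'm::cvec) op \<Rightarrow> 'm \<Rightarrow> 'a" where "e01 X = (\<lambda>\<eta>. fst (X (0, \<eta>)))"
definition e11 :: "('a::star_alg, 'm::cvec) op \<Rightarrow> 'm \<Rightarrow> 'm" where "e11 X = (\<lambda>\<eta>. snd (X (0, \<eta>)))"

definition clinear_fun :: "('a::cvec \<Rightarrow> 'm \<Rightarrow> 'b::cvec) \<Rightarrow> bool" where
  "clinear_fun F \<longleftrightarrow> (\<forall>\<eta>. clinear (\<lambda>x. F x \<eta>))"

end

theory Submission
  imports Defs "HOL-Library.Function_Algebras" "HOL-Library.Product_Plus"
begin

lemma dbl_zero: assumes "(x::'b::ab_group_add) = x + x" shows "x = 0"
  using assms by (metis add_cancel_left_right)

lemma neg_from_sum: "(a::'b::ab_group_add) + b = 0 \<Longrightarrow> b = - a"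
  by (simp add: add_eq_0_iff)

lemma scC_zero_right[simp]: "scC c (0::'a::cvec) = 0"
  by (rule dbl_zero) (metis scC_add_right[of c 0 0] add_0)
lemma scC_zero_left[simp]: "scC 0 (x::'a::cvec) = 0"
  by (rule dbl_zero) (metis scC_add_left[of 0 0 x] add_0)
lemma scC_minus_right: "scC c (- (x::'a::cvec)) = - scC c x"
  by (rule neg_from_sum) (metis scC_add_right[of c x "-x"] add.right_inverse scC_zero_right)
lemma scC_diff_right: "scC c ((x::'a::cvec) - y) = scC c x - scC c y"
  using scC_add_right[of c x "-y"] by (simp add: scC_minus_right)
lemma scC_minus_left: "scC (- c) (x::'a::cvec) = - scC c x"
  by (rule neg_from_sum) (metis scC_add_left[of c "-c" x] add.right_inverse scC_zero_left)
lemma scC_sum_right: "scC c (sum f A) = sum (\<lambda>i. scC c (f i :: 'a::cvec)) A"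
  by (induction A rule: infinite_finite_induct) (auto simp: scC_add_right)
lemma scC_half: "scC (1/2) ((x::'a::cvec) + x) = x"
proof -
  have "x + x = scC 2 x" using scC_add_left[of 1 1 x] by (simp add: scC_one)
  then show ?thesis by (simp add: scC_scC scC_one)
qed
lemma self_neg_zero: "(x::'a::cvec) = - x \<Longrightarrow> x = 0"
proof -
  assume "x = - x" then have "x + x = 0" by (metis add.right_inverse)
  then show ?thesis using scC_half[of x] by simp
qed

lemma star_zero[simp]: "star (0::'a::star_alg) = 0"
  by (rule dbl_zero) (metis star_add[of 0 0] add_0)
lemma star_one[simp]: "star (1::'a::star_alg) = 1"
  by (metis star_mult star_star mult_1_left)
lemma star_minus: "star (- (x::'a::star_alg)) = - star x"
  by (rule neg_from_sum) (metis star_add[of x "-x"] add.right_inverse star_zero)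
lemma star_diff: "star ((x::'a::star_alg) - y) = star x - star y"
  using star_add[of x "-y"] by (simp add: star_minus)

instantiation prod :: (cvec, cvec) cvec
begin
definition scC_prod :: "complex \<Rightarrow> 'a \<times> 'b \<Rightarrow> 'a \<times> 'b" where
  "scC_prod c u = (scC c (fst u), scC c (snd u))"
instance by standard (auto simp: scC_prod_def scC_add_right scC_add_left scC_scC scC_one)
end

lemma fst_scC[simp]: "fst (scC c u) = scC c (fst u)" and snd_scC[simp]: "snd (scC c u) = scC c (snd u)"
  by (auto simp: scC_prod_def)

instantiation "fun" :: (type, cvec) cvec
begin
definition scC_fun :: "complex \<Rightarrow> ('a \<Rightarrow> 'b) \<Rightarrow> 'a \<Rightarrow> 'b" where
  "scC_fun c f = (\<lambda>x. scC c (f x))"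
instance by standard (auto simp: scC_fun_def scC_add_right scC_add_left scC_scC scC_one)
end

lemma scC_fun_apply[simp]: "scC c f x = scC c (f x)" by (simp add: scC_fun_def)

lemma sum_fun_apply: "(sum f A) x = sum (\<lambda>i. f i x) A"
  by (induction A rule: infinite_finite_induct) auto

lemma eadd_eq: "eadd X Y = X + Y" by (auto simp: eadd_def fun_eq_iff prod_eq_iff)
lemma ediff_eq: "ediff X Y = X - Y" by (auto simp: ediff_def fun_eq_iff prod_eq_iff)
lemma ezero_eq: "ezero = 0" by (auto simp: ezero_def fun_eq_iff zero_prod_def)
lemma escale_eq: "escale c X = scC c X" by (auto simp: escale_def fun_eq_iff prod_eq_iff)

lemma sum_comp_right: "(sum f A) \<circ> X = sum (\<lambda>i. f i \<circ> X) A"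
  by (auto simp: fun_eq_iff sum_fun_apply)

section \<open>Sesquilinear forms and adjoints\<close>

locale sform =
  fixes B :: "'v::cvec \<Rightarrow> 'v \<Rightarrow> 'a::star_alg"
  assumes add_right: "B u (v + w) = B u v + B u w"
    and scC_right: "B u (scC c v) = scC c (B u v)"
    and symm: "B v u = star (B u v)"
    and nondeg: "(\<And>v. B u v = 0) \<Longrightarrow> u = 0"
begin

lemma add_left: "B (u + v) w = B u w + B v w"
  by (metis add_right star_add symm)
lemma zero_left[simp]: "B 0 w = 0" by (rule dbl_zero) (metis add_left[of 0 0 w] add_0)
lemma zero_right[simp]: "B w 0 = 0" by (rule dbl_zero) (metis add_right[of w 0 0] add_0)
lemma minus_left: "B (- u) w = - B u w"
  proof -
    have "B u w + B (-u) w = 0" using add_left[of u "-u" w] by simp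
    then show ?thesis by (simp add: add_eq_0_iff)
  qed
lemma diff_left: "B (u - v) w = B u w - B v w"
  using add_left[of u "-v" w] by (simp add: minus_left)
lemma minus_right: "B w (- u) = - B w u"
  proof -
    have "B w u + B w (-u) = 0" using add_right[of w u "-u"] by simp
    then show ?thesis by (simp add: add_eq_0_iff)
  qed
lemma scC_left: "B (scC c u) v = scC (cnj c) (B u v)"
  by (metis scC_right star_scC symm)

lemma eq_by_form: assumes h: "\<And>v. B u v = B u' v" shows "u = u'"
proof -
  have "B (u - u') v = 0" for v unfolding diff_left h by simp
  then have "u - u' = 0" by (rule nondeg)
  then show ?thesis by simp
qed

definition adjointable :: "('v \<Rightarrow> 'v) \<Rightarrow> bool" where
  "adjointable T \<longleftrightarrow> (\<exists>S. \<forall>u v. B (T u) v = B u (S v))"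

definition adjoint :: "('v \<Rightarrow> 'v) \<Rightarrow> 'v \<Rightarrow> 'v" where
  "adjoint T = (SOME S. \<forall>u v. B (T u) v = B u (S v))"

lemma adjoint_prop_all: assumes "adjointable T" shows "\<forall>u v. B (T u) v = B u (adjoint T v)"
proof -
  from assms obtain S where "\<forall>u v. B (T u) v = B u (S v)" unfolding adjointable_def by blast
  then show ?thesis unfolding adjoint_def by (rule someI[where P="\<lambda>S. \<forall>u v. B (T u) v = B u (S v)"])
qed
lemma adjoint_prop: "adjointable T \<Longrightarrow> B (T u) v = B u (adjoint T v)"
  using adjoint_prop_all by blast

lemma flip: "B u v = star (B v u)" by (rule symm)

lemma adjoint_prop2: "adjointable T \<Longrightarrow> B (adjoint T u) v = B u (T v)"
proof -
  assume a: "adjointable T"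
  have "B (adjoint T u) v = star (B v (adjoint T u))" by (rule flip)
  also have "\<dots> = star (B (T v) u)" by (simp add: adjoint_prop[OF a])
  also have "\<dots> = B u (T v)" by (rule flip[symmetric])
  finally show ?thesis .
qed

lemma adjoint_unique: "(\<And>u v. B (T u) v = B u (S v)) \<Longrightarrow> adjoint T = S"
proof -
  assume h: "\<And>u v. B (T u) v = B u (S v)"
  then have a: "adjointable T" unfolding adjointable_def by blast
  show ?thesis
  proof
    fix v show "adjoint T v = S v"
    proof (rule eq_by_form)
      fix w
      have "B (adjoint T v) w = B v (T w)" by (rule adjoint_prop2[OF a])
      also have "\<dots> = star (B (T w) v)" by (rule flip)
      also have "\<dots> = star (B w (S v))" by (simp add: h)
      also have "\<dots> = B (S v) w" by (rule flip[symmetric])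
      finally show "B (adjoint T v) w = B (S v) w" .
    qed
  qed
qed

lemma adjointableI: "(\<And>u v. B (T u) v = B u (S v)) \<Longrightarrow> adjointable T"
  unfolding adjointable_def by blast

lemma adj_add: assumes a: "adjointable T" shows "T (u + v) = T u + T v"
  by (rule eq_by_form) (simp add: adjoint_prop[OF a] add_left)
lemma adj_zero: assumes a: "adjointable T" shows "T 0 = 0"
proof -
  have "T 0 = T 0 + T 0" using adj_add[OF a, of 0 0] by simp
  then show ?thesis by (rule dbl_zero)
qed
lemma adj_minus: assumes "adjointable T" shows "T (- u) = - T u"
  proof -
    have "T u + T (-u) = 0" using adj_add[OF assms, of u "-u"] adj_zero[OF assms] by simp
    then show ?thesis by (simp add: add_eq_0_iff)
  qed
lemma adj_diff: assumes a: "adjointable T" shows "T (u - v) = T u - T v"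
  using adj_add[OF a, of u "-v"] adj_minus[OF a, of v] by simp
lemma adj_scC: assumes a: "adjointable T" shows "T (scC c u) = scC c (T u)"
  by (rule eq_by_form) (simp add: adjoint_prop[OF a] scC_left)
lemma adj_sum: assumes a: "adjointable T" shows "T (sum f A) = sum (\<lambda>i. T (f i)) A"
  by (induction A rule: infinite_finite_induct) (simp_all add: adj_add[OF a] adj_zero[OF a])

lemma adjoint_adjointable: "adjointable T \<Longrightarrow> adjointable (adjoint T)"
  by (rule adjointableI[where S=T]) (rule adjoint_prop2)
lemma adjoint_adjoint: "adjointable T \<Longrightarrow> adjoint (adjoint T) = T"
  by (rule adjoint_unique) (rule adjoint_prop2)

lemma adjointable_comp: assumes a: "adjointable T" and b: "adjointable T'" shows "adjointable (T \<circ> T')"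
  by (rule adjointableI[where S="adjoint T' \<circ> adjoint T"]) (simp add: adjoint_prop[OF a] adjoint_prop[OF b])
lemma adjoint_comp: assumes a: "adjointable T" and b: "adjointable T'" shows "adjoint (T \<circ> T') = adjoint T' \<circ> adjoint T"
  by (rule adjoint_unique) (simp add: adjoint_prop[OF a] adjoint_prop[OF b])
lemma adjointable_add: assumes a: "adjointable T" and b: "adjointable T'" shows "adjointable (T + T')"
  by (rule adjointableI[where S="adjoint T + adjoint T'"]) (simp add: adjoint_prop[OF a] adjoint_prop[OF b] add_left add_right)
lemma adjoint_add: assumes a: "adjointable T" and b: "adjointable T'" shows "adjoint (T + T') = adjoint T + adjoint T'"
  by (rule adjoint_unique) (simp add: adjoint_prop[OF a] adjoint_prop[OF b] add_left add_right)
lemma adjointable_uminus: assumes a: "adjointable T" shows "adjointable (- T)"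
  by (rule adjointableI[where S="- adjoint T"]) (simp add: adjoint_prop[OF a] minus_left minus_right)
lemma adjoint_uminus: assumes a: "adjointable T" shows "adjoint (- T) = - adjoint T"
  by (rule adjoint_unique) (simp add: adjoint_prop[OF a] minus_left minus_right)
lemma adjointable_diff: assumes a: "adjointable T" and b: "adjointable T'" shows "adjointable (T - T')"
  unfolding diff_conv_add_uminus by (intro adjointable_add adjointable_uminus a b)
lemma adjoint_diff: assumes a: "adjointable T" and b: "adjointable T'" shows "adjoint (T - T') = adjoint T - adjoint T'"
  unfolding diff_conv_add_uminus adjoint_add[OF a adjointable_uminus[OF b]] adjoint_uminus[OF b] ..
lemma adjointable_scC: assumes a: "adjointable T" shows "adjointable (scC c T)"
  by (rule adjointableI[where S="scC (cnj c) (adjoint T)"]) (simp add: adjoint_prop[OF a] scC_left scC_right)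
lemma adjoint_scC: assumes a: "adjointable T" shows "adjoint (scC c T) = scC (cnj c) (adjoint T)"
  by (rule adjoint_unique) (simp add: adjoint_prop[OF a] scC_left scC_right)
lemma adjointable_zero: "adjointable 0"
  by (rule adjointableI[where S=0]) simp
lemma adjoint_zero: "adjoint 0 = 0"
  by (rule adjoint_unique) simp
lemma adjointable_sum: "(\<And>i. i \<in> A \<Longrightarrow> adjointable (f i)) \<Longrightarrow> adjointable (sum f A)"
  by (induction A rule: infinite_finite_induct) (auto simp: adjointable_add adjointable_zero)
lemma adjoint_sum: "(\<And>i. i \<in> A \<Longrightarrow> adjointable (f i)) \<Longrightarrow> adjoint (sum f A) = sum (\<lambda>i. adjoint (f i)) A"
proof (induction A rule: infinite_finite_induct)
  case (infinite A) then show ?case by (metis adjoint_zero sum.infinite)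
next
  case empty then show ?case by (metis adjoint_zero sum.empty)
next
  case (insert x F)
  have a1: "adjointable (f x)" using insert.prems by simp
  have a2: "adjointable (sum f F)" by (rule adjointable_sum) (use insert.prems in auto)
  have "adjoint (sum f (insert x F)) = adjoint (f x + sum f F)" using insert.hyps by simp
  also have "\<dots> = adjoint (f x) + adjoint (sum f F)" by (rule adjoint_add[OF a1 a2])
  also have "adjoint (sum f F) = sum (\<lambda>i. adjoint (f i)) F" using insert.IH insert.prems by simp
  finally show ?case using insert.hyps by simp
qed

lemma comp_add_right: assumes a: "adjointable T" shows "T \<circ> (X + Y) = (T \<circ> X) + (T \<circ> Y)"
  by (simp add: fun_eq_iff adj_add[OF a])
lemma comp_uminus_right: assumes a: "adjointable T" shows "T \<circ> (- X) = - (T \<circ> X)"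
  by (simp add: fun_eq_iff adj_minus[OF a])
lemma comp_diff_right: assumes a: "adjointable T" shows "T \<circ> (X - Y) = (T \<circ> X) - (T \<circ> Y)"
  by (simp add: fun_eq_iff adj_diff[OF a])
lemma comp_scC_right: assumes a: "adjointable T" shows "T \<circ> (scC c X) = scC c (T \<circ> X)"
  by (simp add: fun_eq_iff adj_scC[OF a])
lemma comp_sum_right: assumes a: "adjointable T" shows "T \<circ> (sum f A) = sum (\<lambda>i. T \<circ> f i) A"
  by (simp add: fun_eq_iff adj_sum[OF a] sum_fun_apply)
end

lemma comp_add_left: "(X + Y) \<circ> T = (X \<circ> T) + (Y \<circ> T)" by (auto simp: fun_eq_iff)
lemma comp_uminus_left: "(- X) \<circ> T = - (X \<circ> T)" by (auto simp: fun_eq_iff)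
lemma comp_diff_left: "(X - Y) \<circ> T = (X \<circ> T) - (Y \<circ> T)" by (auto simp: fun_eq_iff)
lemma comp_scC_left: "(scC c X) \<circ> T = scC c (X \<circ> T)" by (auto simp: fun_eq_iff)



lemma rep_star_zero:
  fixes a :: "'a::star_alg"
  assumes A: "unital_star_subalg_of_Bh (rep :: 'a::star_alg \<Rightarrow> 'h::chilbert \<Rightarrow> 'h)"
    and h: "star a * a = 0"
  shows "a = 0"
proof -
  from A have inj: "inj rep" and mult: "\<And>x y. rep (x * y) = rep x \<circ> rep y"
    and add: "\<And>x y. rep (x + y) = (\<lambda>v. rep x v + rep y v)"
    and adj: "\<And>x v w. cinner (rep x v) w = cinner v (rep (star x) w)"
    unfolding unital_star_subalg_of_Bh_def by auto
  have r0: "rep 0 v = 0" for v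
  proof -
    have "rep 0 v = rep 0 v + rep 0 v" using add[of 0 0] by (metis add_0)
    then show ?thesis by (rule dbl_zero)
  qed
  have c0: "cinner v (0::'h) = 0" for v
  proof -
    have "cinner v (0::'h) = cinner v 0 + cinner v 0" using cinner_add_right[of v 0 0] by (metis add_0)
    then show ?thesis by (rule dbl_zero)
  qed
  have "rep a v = 0" for v
  proof -
    have "cinner (rep a v) (rep a v) = cinner v (rep (star a) (rep a v))" by (rule adj)
    also have "\<dots> = cinner v (rep (star a * a) v)" by (simp add: mult)
    also have "\<dots> = 0" using h r0 c0 by simp
    finally show ?thesis by (rule cinner_definite)
  qed
  then have "rep a = rep 0" using r0 by auto
  then show ?thesis using inj by (simp add: inj_eq)
qed

locale thmctx =
  fixes rep :: "'a::star_alg \<Rightarrow> 'h::chilbert \<Rightarrow> 'h"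
    and L :: "'a \<Rightarrow> 'a"
    and ract :: "'m::cvec \<Rightarrow> 'a \<Rightarrow> 'm"
    and ip :: "'m \<Rightarrow> 'm \<Rightarrow> 'a"
    and \<pi> :: "'a \<Rightarrow> 'm \<Rightarrow> 'm"
    and \<delta> :: "'a \<Rightarrow> 'm"
  assumes A: "unital_star_subalg_of_Bh rep"
    and L_lin: "clinear L"
    and L_star: "\<And>x. L (star x) = star (L x)"
    and canon: "canonical_triple rep L ract ip \<pi> \<delta>"
    and H2: "H2_vanishes ip \<pi>"
begin

lemma PH: "pre_hilbert_module rep ract ip" by (rule canon[unfolded canonical_triple_def, THEN conjunct1])

lemma ract_assoc: "ract \<xi> (a * b) = ract (ract \<xi> a) b" by (rule PH[unfolded pre_hilbert_module_def, THEN conjunct1, rule_format])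
lemma ract_one[simp]: "ract \<xi> 1 = \<xi>" by (rule PH[unfolded pre_hilbert_module_def, THEN conjunct2, THEN conjunct1, rule_format])
lemma ract_add_left: "ract (\<xi> + \<eta>) a = ract \<xi> a + ract \<eta> a" by (rule PH[unfolded pre_hilbert_module_def, THEN conjunct2, THEN conjunct2, THEN conjunct1, rule_format])
lemma ract_add_right: "ract \<xi> (a + b) = ract \<xi> a + ract \<xi> b" by (rule PH[unfolded pre_hilbert_module_def, THEN conjunct2, THEN conjunct2, THEN conjunct2, THEN conjunct1, rule_format])
lemma ract_scC_left: "ract (scC c \<xi>) a = scC c (ract \<xi> a)" by (rule PH[unfolded pre_hilbert_module_def, THEN conjunct2, THEN conjunct2, THEN conjunct2, THEN conjunct2, THEN conjunct1, rule_format])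
lemma ip_add_right: "ip \<xi> (\<eta> + \<zeta>) = ip \<xi> \<eta> + ip \<xi> \<zeta>" by (rule PH[unfolded pre_hilbert_module_def, THEN conjunct2, THEN conjunct2, THEN conjunct2, THEN conjunct2, THEN conjunct2, THEN conjunct2, THEN conjunct1, rule_format])
lemma ip_scC_right: "ip \<xi> (scC c \<eta>) = scC c (ip \<xi> \<eta>)" by (rule PH[unfolded pre_hilbert_module_def, THEN conjunct2, THEN conjunct2, THEN conjunct2, THEN conjunct2, THEN conjunct2, THEN conjunct2, THEN conjunct2, THEN conjunct1, rule_format])
lemma ip_ract_right: "ip \<xi> (ract \<eta> a) = ip \<xi> \<eta> * a" by (rule PH[unfolded pre_hilbert_module_def, THEN conjunct2, THEN conjunct2, THEN conjunct2, THEN conjunct2, THEN conjunct2, THEN conjunct2, THEN conjunct2, THEN conjunct2, THEN conjunct1, rule_format])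
lemma ip_sym: "ip \<eta> \<xi> = star (ip \<xi> \<eta>)" by (rule PH[unfolded pre_hilbert_module_def, THEN conjunct2, THEN conjunct2, THEN conjunct2, THEN conjunct2, THEN conjunct2, THEN conjunct2, THEN conjunct2, THEN conjunct2, THEN conjunct2, THEN conjunct1, rule_format])
lemma ip_def0: "ip \<xi> \<xi> = 0 \<Longrightarrow> \<xi> = 0" by (rule PH[unfolded pre_hilbert_module_def, THEN conjunct2, THEN conjunct2, THEN conjunct2, THEN conjunct2, THEN conjunct2, THEN conjunct2, THEN conjunct2, THEN conjunct2, THEN conjunct2, THEN conjunct2, THEN conjunct2, rule_format])

lemma ract_zero[simp]: "ract 0 a = 0"
  by (rule dbl_zero) (metis ract_add_left[of 0 0 a] add_0)

lemma pi_adj: "is_adjoint_of ip (\<pi> x) (\<pi> (star x))" by (rule canon[unfolded canonical_triple_def, THEN conjunct2, THEN conjunct1, rule_format, THEN conjunct2])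
lemma pi_one: "\<pi> 1 = id" by (rule canon[unfolded canonical_triple_def, THEN conjunct2, THEN conjunct2, THEN conjunct1, rule_format])
lemma pi_mult: "\<pi> (x * y) = \<pi> x \<circ> \<pi> y" by (rule canon[unfolded canonical_triple_def, THEN conjunct2, THEN conjunct2, THEN conjunct2, THEN conjunct1, rule_format])
lemma pi_add: "\<pi> (x + y) = (\<lambda>\<xi>. \<pi> x \<xi> + \<pi> y \<xi>)" by (rule canon[unfolded canonical_triple_def, THEN conjunct2, THEN conjunct2, THEN conjunct2, THEN conjunct2, THEN conjunct1, rule_format])
lemma pi_scC: "\<pi> (scC c x) = (\<lambda>\<xi>. scC c (\<pi> x \<xi>))" by (rule canon[unfolded canonical_triple_def, THEN conjunct2, THEN conjunct2, THEN conjunct2, THEN conjunct2, THEN conjunct2, THEN conjunct1, rule_format])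
lemma pi_ract: "\<pi> x (ract \<xi> a) = ract (\<pi> x \<xi>) a" by (rule canon[unfolded canonical_triple_def, THEN conjunct2, THEN conjunct2, THEN conjunct2, THEN conjunct2, THEN conjunct2, THEN conjunct2, THEN conjunct1, rule_format])
lemma delta_lin: "clinear \<delta>" by (rule canon[unfolded canonical_triple_def, THEN conjunct2, THEN conjunct2, THEN conjunct2, THEN conjunct2, THEN conjunct2, THEN conjunct2, THEN conjunct2, THEN conjunct1, rule_format])
lemma delta_mult: "\<delta> (x * y) = \<pi> x (\<delta> y) + ract (\<delta> x) y" by (rule canon[unfolded canonical_triple_def, THEN conjunct2, THEN conjunct2, THEN conjunct2, THEN conjunct2, THEN conjunct2, THEN conjunct2, THEN conjunct2, THEN conjunct2, THEN conjunct1, rule_format])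
lemma L_mult: "L (x * y) - x * L y - L x * y = ip (\<delta> (star x)) (\<delta> y)" by (rule canon[unfolded canonical_triple_def, THEN conjunct2, THEN conjunct2, THEN conjunct2, THEN conjunct2, THEN conjunct2, THEN conjunct2, THEN conjunct2, THEN conjunct2, THEN conjunct2, THEN conjunct2, rule_format])

lemma delta_add: "\<delta> (x + y) = \<delta> x + \<delta> y" by (rule delta_lin[unfolded clinear_def, THEN conjunct1, rule_format])
lemma delta_scC: "\<delta> (scC c x) = scC c (\<delta> x)" by (rule delta_lin[unfolded clinear_def, THEN conjunct2, rule_format])
lemma L_add: "L (x + y) = L x + L y" by (rule L_lin[unfolded clinear_def, THEN conjunct1, rule_format])
lemma L_scC: "L (scC c x) = scC c (L x)" by (rule L_lin[unfolded clinear_def, THEN conjunct2, rule_format])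

sublocale M: sform ip
proof
  show "ip u (v + w) = ip u v + ip u w" for u v w by (rule ip_add_right)
  show "ip u (scC c v) = scC c (ip u v)" for u c v by (rule ip_scC_right)
  show "ip v u = star (ip u v)" for u v by (rule ip_sym)
  show "(\<And>v. ip u v = 0) \<Longrightarrow> u = 0" for u using ip_def0 by blast
qed

sublocale S: sform "ipS ip"
proof
  show "ipS ip u (v + w) = ipS ip u v + ipS ip u w" for u v w
    by (simp add: ipS_def distrib_left ip_add_right algebra_simps)
  show "ipS ip u (scC c v) = scC c (ipS ip u v)" for u c v
    by (simp add: ipS_def scC_mult_right ip_scC_right scC_add_right)
  show "ipS ip v u = star (ipS ip u v)" for u v
    by (simp add: ipS_def star_add star_mult star_star ip_sym[of "snd v"])
  show "(\<And>v. ipS ip u v = 0) \<Longrightarrow> u = 0" for u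
  proof -
    assume h: "\<And>v. ipS ip u v = 0"
    have "star (fst u) * fst u = 0" using h[of "(fst u, 0)"] by (simp add: ipS_def)
    then have a: "fst u = 0" by (rule rep_star_zero[OF A])
    have "ip (snd u) (snd u) = 0" using h[of "(0, snd u)"] by (simp add: ipS_def)
    then have "snd u = 0" by (rule ip_def0)
    with a show "u = 0" by (simp add: prod_eq_iff)
  qed
qed

lemma ip_ract_left: "ip (ract \<xi> a) \<eta> = star a * ip \<xi> \<eta>"
  by (simp add: ip_sym[of _ \<eta>] ip_ract_right star_mult star_star)

lemma pi_adjointable: "M.adjointable (\<pi> x)"
  using pi_adj unfolding is_adjoint_of_def M.adjointable_def by blast
lemma pi_adj_eq: "ip (\<pi> x \<xi>) \<eta> = ip \<xi> (\<pi> (star x) \<eta>)"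
  using pi_adj unfolding is_adjoint_of_def by blast

lemma pi_zero[simp]: "\<pi> x 0 = 0" using M.adj_zero[OF pi_adjointable] .
lemma pi_minus: "\<pi> x (- \<xi>) = - \<pi> x \<xi>" using pi_adjointable by (simp add: M.adj_minus)
lemma pi_addv: "\<pi> x (\<xi> + \<eta>) = \<pi> x \<xi> + \<pi> x \<eta>" using pi_adjointable by (simp add: M.adj_add)
lemma pi_scCv: "\<pi> x (scC c \<xi>) = scC c (\<pi> x \<xi>)" using pi_adjointable by (simp add: M.adj_scC)

lemma EL_iff: "X \<in> EL ip \<longleftrightarrow> S.adjointable X"
  by (simp add: EL_def S.adjointable_def)
lemma adjE_eq: "adjE ip X = S.adjoint X"
  by (simp add: adjE_def S.adjoint_def)

end


context thmctx begin

definition gam :: "'a \<times> 'm \<Rightarrow> 'a \<times> 'm" where "gam u = (fst u, - snd u)"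
definition Gc :: "('a, 'm) op \<Rightarrow> ('a, 'm) op" where "Gc X = gam \<circ> X \<circ> gam"
definition sg :: "nat \<Rightarrow> ('a, 'm) op \<Rightarrow> ('a, 'm) op" where "sg k X = (if even k then X else - X)"
definition D1 :: "'a \<Rightarrow> ('a, 'm) op" where
  "D1 x = (\<lambda>u. (ip (\<delta> (star x)) (snd u), ract (\<delta> x) (fst u)))"
definition Cn :: "'a \<Rightarrow> ('a, 'm) op" where "Cn a = (\<lambda>u. (a * fst u, 0))"
definition rm :: "'a \<times> 'm \<Rightarrow> 'a \<Rightarrow> 'a \<times> 'm" where "rm u a = (fst u * a, ract (snd u) a)"

abbreviation T :: "'a \<Rightarrow> ('a, 'm) op" where "T x \<equiv> tpi \<pi> x"
abbreviation adjb :: "('a, 'm) op \<Rightarrow> bool" where "adjb X \<equiv> S.adjointable X"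
abbreviation adj :: "('a, 'm) op \<Rightarrow> ('a, 'm) op" where "adj X \<equiv> S.adjoint X"

lemma star_ip: "star (ip \<xi> \<eta>) = ip \<eta> \<xi>" by (rule ip_sym[symmetric])

lemma T_adj: "\<forall>u v. ipS ip (T x u) v = ipS ip u (T (star x) v)"
  by (simp add: ipS_def tpi_def star_mult mult.assoc pi_adj_eq)
lemma T_adjb: "adjb (T x)" using T_adj by (blast intro: S.adjointableI)
lemma T_adjoint: "adj (T x) = T (star x)" using T_adj by (blast intro: S.adjoint_unique)

lemma D1_adj: "\<forall>u v. ipS ip (D1 x u) v = ipS ip u (D1 (star x) v)"
  by (simp add: ipS_def D1_def star_ip ip_ract_left ip_ract_right star_star add.commute)
lemma D1_adjb: "adjb (D1 x)" using D1_adj by (blast intro: S.adjointableI)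
lemma D1_adjoint: "adj (D1 x) = D1 (star x)" using D1_adj by (blast intro: S.adjoint_unique)

lemma gam_adj: "\<forall>u v. ipS ip (gam u) v = ipS ip u (gam v)"
  by (simp add: ipS_def gam_def M.minus_left M.minus_right)
lemma gam_adjb: "adjb gam" using gam_adj by (blast intro: S.adjointableI)
lemma gam_adjoint: "adj gam = gam" using gam_adj by (blast intro: S.adjoint_unique)

lemma Cn_adj: "\<forall>u v. ipS ip (Cn a u) v = ipS ip u (Cn (star a) v)"
  by (simp add: ipS_def Cn_def star_mult mult.assoc)
lemma Cn_adjb: "adjb (Cn a)" using Cn_adj by (blast intro: S.adjointableI)

lemma ipS_rm: "ipS ip (rm u a) v = star a * ipS ip u v"
  by (simp add: ipS_def rm_def star_mult mult.assoc ip_ract_left distrib_left)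

lemma adjb_rm: assumes h: "adjb X" shows "X (rm u a) = rm (X u) a"
proof (rule S.eq_by_form)
  fix v
  have "ipS ip (X (rm u a)) v = ipS ip (rm u a) (adj X v)" by (rule S.adjoint_prop[OF h])
  also have "\<dots> = star a * ipS ip u (adj X v)" by (rule ipS_rm)
  also have "\<dots> = star a * ipS ip (X u) v" by (simp add: S.adjoint_prop[OF h])
  also have "\<dots> = ipS ip (rm (X u) a) v" by (rule ipS_rm[symmetric])
  finally show "ipS ip (X (rm u a)) v = ipS ip (rm (X u) a) v" .
qed

lemma Gc_adjb: "adjb X \<Longrightarrow> adjb (Gc X)"
  unfolding Gc_def by (intro S.adjointable_comp gam_adjb)
lemma Gc_adjoint: "adjb X \<Longrightarrow> adj (Gc X) = Gc (adj X)"
  unfolding Gc_def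
  by (simp add: S.adjoint_comp S.adjointable_comp gam_adjb gam_adjoint comp_assoc)

lemma e00_add: "e00 (X + Y) = e00 X + e00 Y" by (simp add: e00_def)
lemma e00_uminus: "e00 (- X) = - e00 X" by (simp add: e00_def)
lemma e00_scC: "e00 (scC c X) = scC c (e00 X)" by (simp add: e00_def)
lemma e00_sum: "e00 (sum f A) = sum (\<lambda>i. e00 (f i)) A" by (simp add: e00_def sum_fun_apply fst_sum)
lemma e00_T_left: "e00 (T x \<circ> Y) = x * e00 Y" by (simp add: e00_def tpi_def)
lemma e00_T_right: assumes h: "adjb X" shows "e00 (X \<circ> T y) = e00 X * y"
proof -
  have "T y (1, 0) = rm (1, 0) y" by (simp add: tpi_def rm_def)
  then have "(X \<circ> T y) (1, 0) = rm (X (1, 0)) y" by (simp add: adjb_rm[OF h])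
  then show ?thesis by (simp add: e00_def rm_def)
qed
lemma e00_adjoint: assumes h: "adjb Y" shows "e00 (adj Y) = star (e00 Y)"
proof -
  have "e00 (adj Y) = ipS ip (1, 0) (adj Y (1, 0))" by (simp add: ipS_def e00_def)
  also have "\<dots> = ipS ip (Y (1, 0)) (1, 0)" by (simp add: S.adjoint_prop[OF h])
  also have "\<dots> = star (e00 Y)" by (simp add: ipS_def e00_def)
  finally show ?thesis .
qed
lemma e00_Gc: "e00 (Gc X) = e00 X" by (simp add: e00_def Gc_def gam_def)
lemma e00_Cn: "e00 (Cn a) = a" by (simp add: e00_def Cn_def)
lemma e00_D1D1: "e00 (D1 x \<circ> D1 y) = ip (\<delta> (star x)) (\<delta> y)" by (simp add: e00_def D1_def)

section \<open>Grading\<close>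

lemma gam_gam[simp]: "gam (gam u) = u" by (simp add: gam_def)
lemma gam_add: "gam (u + v) = gam u + gam v" by (simp add: gam_def)
lemma gam_uminus: "gam (- u) = - gam u" by (simp add: gam_def)
lemma gam_scC: "gam (scC c u) = scC c (gam u)" by (simp add: gam_def scC_prod_def scC_minus_right)
lemma gam_zero: "gam 0 = 0" by (simp add: gam_def zero_prod_def)

lemma Gc_comp: "Gc (X \<circ> Y) = Gc X \<circ> Gc Y" by (simp add: Gc_def fun_eq_iff)
lemma Gc_add: "Gc (X + Y) = Gc X + Gc Y" by (simp add: Gc_def fun_eq_iff gam_add)
lemma Gc_uminus: "Gc (- X) = - Gc X" by (simp add: Gc_def fun_eq_iff gam_uminus)
lemma Gc_scC: "Gc (scC c X) = scC c (Gc X)" by (simp add: Gc_def fun_eq_iff gam_scC)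
lemma Gc_zero: "Gc 0 = 0" by (simp add: Gc_def fun_eq_iff gam_zero)
lemma Gc_sum: "Gc (sum f A) = sum (\<lambda>i. Gc (f i)) A"
proof (induction A rule: infinite_finite_induct)
  case (infinite A) then show ?case by (metis Gc_zero sum.infinite)
next
  case empty then show ?case by (metis Gc_zero sum.empty)
next
  case (insert x F) then show ?case by (metis Gc_add sum.insert)
qed
lemma Gc_Gc: "Gc (Gc X) = X" by (simp add: Gc_def fun_eq_iff)
lemma Gc_T: "Gc (T x) = T x" by (simp add: Gc_def fun_eq_iff tpi_def gam_def pi_minus)
lemma Gc_D1: "Gc (D1 x) = - D1 x" by (simp add: Gc_def fun_eq_iff D1_def gam_def M.minus_right)
lemma Gc_Cn: "Gc (Cn a) = Cn a" by (simp add: Gc_def fun_eq_iff Cn_def gam_def)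

lemma sg_add: "sg k (X + Y) = sg k X + sg k Y" by (simp add: sg_def)
lemma sg_sg: "sg k (sg k X) = X" by (simp add: sg_def)
lemma sg_scC: "sg k (scC c X) = scC c (sg k X)" by (simp add: sg_def fun_eq_iff scC_minus_right)
lemma Gc_sg: "Gc (sg k X) = sg k (Gc X)" by (simp add: sg_def Gc_uminus)
lemma sg_adjb: "adjb X \<Longrightarrow> adjb (sg k X)" by (simp add: sg_def S.adjointable_uminus)
lemma sg_adjoint: "adjb X \<Longrightarrow> adj (sg k X) = sg k (adj X)" by (simp add: sg_def S.adjoint_uminus)
lemma sg_comp_left: "sg k X \<circ> Z = sg k (X \<circ> Z)" by (simp add: sg_def comp_uminus_left)
lemma sg_comp_right: "adjb W \<Longrightarrow> W \<circ> sg k X = sg k (W \<circ> X)" by (simp add: sg_def S.comp_uminus_right)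
lemma sg_comp: "adjb X \<Longrightarrow> sg i X \<circ> sg j Y = sg (i + j) (X \<circ> Y)"
  by (simp add: sg_def comp_uminus_left S.comp_uminus_right)
lemma sg_sum: "sg k (sum f A) = sum (\<lambda>i. sg k (f i)) A"
  by (simp add: sg_def sum_negf)

lemma par_even: assumes h: "adjb X" and g: "Gc X = X"
  shows "e10 X = 0" and "e01 X = (\<lambda>_. 0)"
proof -
  have "X (1, 0) = gam (X (gam (1, 0)))" using g by (metis Gc_def comp_apply)
  then have "snd (X (1, 0)) = snd (gam (X (1, 0)))" by (simp add: gam_def zero_prod_def)
  then have "snd (X (1, 0)) = - snd (X (1, 0))" by (simp add: gam_def)
  then show "e10 X = 0" unfolding e10_def by (rule self_neg_zero)
  show "e01 X = (\<lambda>_. 0)"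
  proof
    fix \<eta>
    have "X (0, \<eta>) = gam (X (gam (0, \<eta>)))" using g by (metis Gc_def comp_apply)
    also have "\<dots> = gam (X (- (0, \<eta>)))" by (simp add: gam_def)
    also have "\<dots> = - gam (X (0, \<eta>))" by (simp only: S.adj_minus[OF h] gam_uminus)
    finally have "fst (X (0, \<eta>)) = fst (- gam (X (0, \<eta>)))" by (rule arg_cong[where f=fst])
    then have "fst (X (0, \<eta>)) = - fst (X (0, \<eta>))" by (simp add: gam_def)
    then show "e01 X \<eta> = 0" unfolding e01_def by (rule self_neg_zero)
  qed
qed

lemma par_odd: assumes h: "adjb X" and g: "Gc X = - X"
  shows "e00 X = 0" and "e11 X = (\<lambda>_. 0)"
proof -
  have "- X (1, 0) = gam (X (gam (1, 0)))" using g by (metis Gc_def comp_apply uminus_apply)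
  then have "fst (- X (1, 0)) = fst (gam (X (1, 0)))" by (simp add: gam_def zero_prod_def)
  then have "fst (X (1, 0)) = - fst (X (1, 0))" by (simp add: gam_def)
  then show "e00 X = 0" unfolding e00_def by (rule self_neg_zero)
  show "e11 X = (\<lambda>_. 0)"
  proof
    fix \<eta>
    have "- X (0, \<eta>) = gam (X (gam (0, \<eta>)))" using g by (metis Gc_def comp_apply uminus_apply)
    also have "\<dots> = gam (X (- (0, \<eta>)))" by (simp add: gam_def)
    also have "\<dots> = - gam (X (0, \<eta>))" by (simp only: S.adj_minus[OF h] gam_uminus)
    finally have "snd (- X (0, \<eta>)) = snd (- gam (X (0, \<eta>)))" by (rule arg_cong[where f=snd])
    then have "snd (X (0, \<eta>)) = - snd (X (0, \<eta>))" by (simp add: gam_def)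
    then show "e11 X \<eta> = 0" unfolding e11_def by (rule self_neg_zero)
  qed
qed

end


lemma ag1: "(- F :: 'b::ab_group_add) = A - G + C \<Longrightarrow> G = A + C + F"
  by (simp add: algebra_simps eq_neg_iff_add_eq_0 add_eq_0_iff)

lemma half_split: "(F::'b::cvec) = scC (1/2) F + scC (1/2) F"
  by (metis scC_add_right scC_half)

context thmctx begin

definition lin :: "('a \<Rightarrow> ('a, 'm) op) \<Rightarrow> bool" where
  "lin g \<longleftrightarrow> (\<forall>x y. g (x + y) = g x + g y) \<and> (\<forall>c x. g (scC c x) = scC c (g x))"

definition Sol :: "('a \<Rightarrow> 'a \<Rightarrow> ('a, 'm) op) \<Rightarrow> ('a \<Rightarrow> ('a, 'm) op) \<Rightarrow> bool" where
  "Sol F g \<longleftrightarrow> (\<forall>x. adjb (g x)) \<and> lin g \<and> (\<forall>x y. g (x * y) = (T x \<circ> g y) + (g x \<circ> T y) + F x y)"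

lemma lin_add: "lin g \<Longrightarrow> g (x + y) = g x + g y" by (simp add: lin_def)
lemma lin_scC: "lin g \<Longrightarrow> g (scC c x) = scC c (g x)" by (simp add: lin_def)

lemma clinearE_lin: "clinearE g \<longleftrightarrow> lin g"
  by (simp add: clinearE_def lin_def eadd_eq escale_eq)

lemma Sol_avg:
  assumes s1: "Sol F g1" and s2: "Sol F g2"
  shows "Sol F (\<lambda>x. scC (1/2) (g1 x + g2 x))"
  unfolding Sol_def
proof (intro conjI allI)
  fix x
  show "adjb (scC (1/2) (g1 x + g2 x))"
    using s1 s2 unfolding Sol_def by (intro S.adjointable_scC S.adjointable_add) auto
next
  show "lin (\<lambda>x. scC (1/2) (g1 x + g2 x))"
    using s1 s2 unfolding Sol_def lin_def by (simp add: scC_add_right scC_scC mult.commute algebra_simps)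
next
  fix x y
  have h1: "g1 (x * y) = (T x \<circ> g1 y) + (g1 x \<circ> T y) + F x y" using s1 unfolding Sol_def by blast
  have h2: "g2 (x * y) = (T x \<circ> g2 y) + (g2 x \<circ> T y) + F x y" using s2 unfolding Sol_def by blast
  have "scC (1/2) (g1 (x * y) + g2 (x * y)) =
      scC (1/2) ((T x \<circ> g1 y) + (T x \<circ> g2 y)) + scC (1/2) ((g1 x \<circ> T y) + (g2 x \<circ> T y)) + (scC (1/2) (F x y) + scC (1/2) (F x y))"
    unfolding h1 h2 by (simp add: scC_add_right algebra_simps)
  also have "\<dots> = (T x \<circ> scC (1/2) (g1 y + g2 y)) + (scC (1/2) (g1 x + g2 x) \<circ> T y) + F x y"
    by (simp add: S.comp_scC_right[OF T_adjb] S.comp_add_right[OF T_adjb] comp_scC_left comp_add_left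
        half_split[of "F x y", symmetric])
  finally show "scC (1/2) (g1 (x * y) + g2 (x * y)) = (T x \<circ> scC (1/2) (g1 y + g2 y)) + (scC (1/2) (g1 x + g2 x) \<circ> T y) + F x y" .
qed

lemma Sol_star:
  assumes s: "Sol F g" and fa: "\<And>x y. adjb (F x y)" and fs: "\<And>x y. adj (F (star y) (star x)) = F x y"
  shows "Sol F (\<lambda>x. adj (g (star x)))"
  unfolding Sol_def
proof (intro conjI allI)
  have ga: "\<And>x. adjb (g x)" using s unfolding Sol_def by blast
  have gl: "lin g" using s unfolding Sol_def by blast
  fix x
  show "adjb (adj (g (star x)))" using ga by (rule S.adjoint_adjointable)
next
  have ga: "\<And>x. adjb (g x)" using s unfolding Sol_def by blast
  have gl: "lin g" using s unfolding Sol_def by blast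
  show "lin (\<lambda>x. adj (g (star x)))"
    unfolding lin_def
    by (simp add: star_add star_scC lin_add[OF gl] lin_scC[OF gl] S.adjoint_add ga S.adjoint_scC)
next
  have ga: "\<And>x. adjb (g x)" using s unfolding Sol_def by blast
  fix x y
  have h: "g (star y * star x) = (T (star y) \<circ> g (star x)) + (g (star y) \<circ> T (star x)) + F (star y) (star x)"
    using s unfolding Sol_def by blast
  have "adj (g (star (x * y))) = adj ((T (star y) \<circ> g (star x)) + (g (star y) \<circ> T (star x)) + F (star y) (star x))"
    by (simp add: star_mult h)
  also have "\<dots> = (adj (g (star x)) \<circ> T y) + (T x \<circ> adj (g (star y))) + F x y"
    by (simp add: S.adjoint_add S.adjointable_add S.adjointable_comp T_adjb ga fa S.adjoint_comp T_adjoint star_star fs)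
  finally show "adj (g (star (x * y))) = (T x \<circ> adj (g (star y))) + (adj (g (star x)) \<circ> T y) + F x y"
    by (simp add: algebra_simps)
qed

lemma Sol_par:
  assumes s: "Sol F g" and fp: "\<And>x y. Gc (F x y) = sg k (F x y)"
  shows "Sol F (\<lambda>x. sg k (Gc (g x)))"
  unfolding Sol_def
proof (intro conjI allI)
  have ga: "\<And>x. adjb (g x)" using s unfolding Sol_def by blast
  have gl: "lin g" using s unfolding Sol_def by blast
  fix x
  show "adjb (sg k (Gc (g x)))" by (intro sg_adjb Gc_adjb ga)
next
  have gl: "lin g" using s unfolding Sol_def by blast
  show "lin (\<lambda>x. sg k (Gc (g x)))"
    unfolding lin_def by (simp add: lin_add[OF gl] lin_scC[OF gl] Gc_add Gc_scC sg_add sg_scC)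
next
  fix x y
  have h: "g (x * y) = (T x \<circ> g y) + (g x \<circ> T y) + F x y" using s unfolding Sol_def by blast
  show "sg k (Gc (g (x * y))) = (T x \<circ> sg k (Gc (g y))) + (sg k (Gc (g x)) \<circ> T y) + F x y"
    by (simp add: h Gc_add Gc_comp Gc_T fp sg_add sg_sg sg_comp_left sg_comp_right[OF T_adjb])
qed

lemma Sol_corr:
  assumes s: "Sol F g" and dl: "\<And>x y. d (x + y) = d x + d y" and ds: "\<And>c x. d (scC c x) = scC c (d x)"
    and dd: "\<And>x y. d (x * y) = x * d y + d x * y"
  shows "Sol F (\<lambda>x. g x + Cn (d x))"
  unfolding Sol_def
proof (intro conjI allI)
  have ga: "\<And>x. adjb (g x)" using s unfolding Sol_def by blast
  fix x
  show "adjb (g x + Cn (d x))" by (intro S.adjointable_add ga Cn_adjb)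
next
  have gl: "lin g" using s unfolding Sol_def by blast
  have c1: "Cn (a + b) = Cn a + Cn b" for a b by (simp add: Cn_def fun_eq_iff distrib_right)
  have c2: "Cn (scC c a) = scC c (Cn a)" for c a by (simp add: Cn_def fun_eq_iff scC_mult_left scC_prod_def)
  show "lin (\<lambda>x. g x + Cn (d x))"
    unfolding lin_def by (simp add: lin_add[OF gl] lin_scC[OF gl] dl ds c1 c2 scC_add_right algebra_simps)
next
  fix x y
  have h: "g (x * y) = (T x \<circ> g y) + (g x \<circ> T y) + F x y" using s unfolding Sol_def by blast
  have c1: "Cn (a + b) = Cn a + Cn b" for a b by (simp add: Cn_def fun_eq_iff distrib_right)
  have c3: "T x \<circ> Cn a = Cn (x * a)" for a by (simp add: Cn_def tpi_def fun_eq_iff mult.assoc)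
  have c4: "Cn a \<circ> T y = Cn (a * y)" for a by (simp add: Cn_def tpi_def fun_eq_iff mult.assoc)
  show "g (x * y) + Cn (d (x * y)) = (T x \<circ> (g y + Cn (d y))) + ((g x + Cn (d x)) \<circ> T y) + F x y"
    by (simp add: h dd c1 c3 c4 S.comp_add_right[OF T_adjb] comp_add_left algebra_simps)
qed

end


lemma sum_ends: assumes "1 \<le> (k::nat)" shows "(\<Sum>i\<le>k. f i) = f 0 + (\<Sum>i\<in>{1..<k}. f i) + (f k :: 'b::comm_monoid_add)"
proof -
  have e: "{..k} = insert 0 (insert k {1..<k})" using assms by auto
  have "0 \<notin> insert k {1..<k}" using assms by auto
  then show ?thesis unfolding e by (simp add: add_ac)
qed

lemma sum_flip: "(\<Sum>i\<in>{1..<k}. f (k - i)) = (\<Sum>i\<in>{1..<(k::nat)}. (f i :: 'b::comm_monoid_add))"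
  by (rule sum.reindex_bij_witness[where i="\<lambda>i. k - i" and j="\<lambda>i. k - i"]) auto

lemma tri_swap:
  fixes w :: "nat \<Rightarrow> nat \<Rightarrow> nat \<Rightarrow> 'b::comm_monoid_add"
  shows "(\<Sum>m\<le>k. \<Sum>i\<le>m. w i (m - i) (k - m)) = (\<Sum>m\<le>k. \<Sum>i\<le>m. w (k - m) i (m - i))"
proof -
  have 1: "(\<Sum>(i,j)\<in>{(i,j). i + j \<le> k}. w i j (k - i - j)) = (\<Sum>m\<le>k. \<Sum>i\<le>m. w i (m - i) (k - m))"
    by (subst sum.triangle_reindex_eq) (auto intro!: sum.cong)
  have 2: "(\<Sum>(i,j)\<in>{(i,j). i + j \<le> k}. w (k - i - j) i j) = (\<Sum>m\<le>k. \<Sum>i\<le>m. w (k - m) i (m - i))"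
    by (subst sum.triangle_reindex_eq) (auto intro!: sum.cong)
  have 3: "(\<Sum>(i,j)\<in>{(i,j). i + j \<le> k}. w i j (k - i - j)) = (\<Sum>(i,j)\<in>{(i,j). i + j \<le> k}. w (k - i - j) i j)"
    by (rule sum.reindex_bij_witness[where i="\<lambda>(q,r). (k - q - r, q)" and j="\<lambda>(i,j). (j, k - i - j)"]) auto
  show ?thesis using 1 2 3 by simp
qed

context thmctx begin

definition Good :: "nat \<Rightarrow> (nat \<Rightarrow> 'a \<Rightarrow> ('a, 'm) op) \<Rightarrow> bool" where
  "Good n B \<longleftrightarrow> (\<forall>k\<le>n. (\<forall>x. adjb (B k x)) \<and> lin (B k) \<and>
      (\<forall>x y. B k (x * y) = (\<Sum>i\<le>k. B i x \<circ> B (k - i) y)) \<and>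
      (\<forall>x. B k (star x) = adj (B k x)) \<and> (\<forall>x. Gc (B k x) = sg k (B k x))) \<and>
     B 0 = T \<and> B 1 = D1 \<and> (2 \<le> n \<longrightarrow> (\<forall>x. e00 (B 2 x) = L x))"

lemma GD:
  assumes "Good n B" "j \<le> n"
  shows "adjb (B j x)" "lin (B j)" "B j (x * y) = (\<Sum>i\<le>j. B i x \<circ> B (j - i) y)"
    "B j (star x) = adj (B j x)" "Gc (B j x) = sg j (B j x)"
  using assms unfolding Good_def by blast+

lemma GD0: "Good n B \<Longrightarrow> B 0 = T" and GD1: "Good n B \<Longrightarrow> B 1 = D1"
  and GD2: "Good n B \<Longrightarrow> 2 \<le> n \<Longrightarrow> e00 (B 2 x) = L x"
  unfolding Good_def by blast+

lemma Good_cong: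
  assumes g: "Good n B" and n: "1 \<le> n" and e: "\<And>k. k \<le> n \<Longrightarrow> B' k = B k"
  shows "Good n B'"
proof -
  have s: "(\<Sum>i\<le>k. B' i x \<circ> B' (k - i) y) = (\<Sum>i\<le>k. B i x \<circ> B (k - i) y)" if "k \<le> n" for k x y
    using that by (intro sum.cong refl) (simp add: e)
  have blk: "(\<forall>x. adjb (B' k x)) \<and> lin (B' k) \<and>
      (\<forall>x y. B' k (x * y) = (\<Sum>i\<le>k. B' i x \<circ> B' (k - i) y)) \<and>
      (\<forall>x. B' k (star x) = adj (B' k x)) \<and> (\<forall>x. Gc (B' k x) = sg k (B' k x))" if k: "k \<le> n" for k
  proof -
    have ek: "B' k = B k" by (rule e[OF k])
    show ?thesis unfolding ek using GD[OF g k] s[OF k] by simp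
  qed
  have b0: "B' 0 = T" using e[of 0] GD0[OF g] by simp
  have b1: "B' 1 = D1" using e[of 1] n GD1[OF g] by simp
  have b2: "2 \<le> n \<longrightarrow> (\<forall>x. e00 (B' 2 x) = L x)" using e[of 2] GD2[OF g] by simp
  show ?thesis unfolding Good_def using blk b0 b1 b2 by blast
qed

lemma Good_mono: "Good n B \<Longrightarrow> 1 \<le> m \<Longrightarrow> m \<le> n \<Longrightarrow> Good m B"
  unfolding Good_def by auto

lemma T_lin: "lin T"
  unfolding lin_def by (simp add: tpi_def fun_eq_iff distrib_right pi_add scC_mult_left pi_scC scC_prod_def)
lemma D1_lin: "lin D1"
  unfolding lin_def
  by (simp add: D1_def fun_eq_iff star_add delta_add M.add_left ract_add_left star_scC delta_scC M.scC_left
      ract_scC_left scC_prod_def)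
lemma T_hom: "T (x * y) = T x \<circ> T y"
  by (simp add: tpi_def fun_eq_iff mult.assoc pi_mult)
lemma D1_hom: "D1 (x * y) = (T x \<circ> D1 y) + (D1 x \<circ> T y)"
  by (simp add: D1_def tpi_def fun_eq_iff star_mult delta_mult M.add_left pi_adj_eq ip_ract_left star_star
      pi_ract ract_assoc ract_add_left add.commute)

definition B1 :: "nat \<Rightarrow> 'a \<Rightarrow> ('a, 'm) op" where "B1 = (\<lambda>k. if k = 0 then T else D1)"

lemma sum_le1: "(\<Sum>i\<le>(1::nat). f i) = f 0 + (f 1 :: 'b::comm_monoid_add)"
  by (simp add: One_nat_def)

lemma Good_base: "Good 1 B1"
proof -
  have blk: "(\<forall>x. adjb (B1 k x)) \<and> lin (B1 k) \<and>
      (\<forall>x y. B1 k (x * y) = (\<Sum>i\<le>k. B1 i x \<circ> B1 (k - i) y)) \<and>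
      (\<forall>x. B1 k (star x) = adj (B1 k x)) \<and> (\<forall>x. Gc (B1 k x) = sg k (B1 k x))" if k: "k \<le> 1" for k
  proof (cases "k = 0")
    case True then show ?thesis by (simp add: B1_def T_adjb T_lin T_hom T_adjoint Gc_T sg_def)
  next
    case False then have "k = 1" using k by simp
    then show ?thesis by (simp add: sum_le1 B1_def D1_hom D1_adjb D1_lin D1_adjoint Gc_D1 sg_def)
  qed
  show ?thesis unfolding Good_def using blk by (simp add: B1_def)
qed

section \<open>The obstruction cochain\<close>

definition FF :: "(nat \<Rightarrow> 'a \<Rightarrow> ('a, 'm) op) \<Rightarrow> nat \<Rightarrow> 'a \<Rightarrow> 'a \<Rightarrow> ('a, 'm) op" where
  "FF B k x y = (\<Sum>i\<in>{1..<k}. B i x \<circ> B (k - i) y)"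

lemma idx: "i \<in> {1..<Suc n} \<Longrightarrow> i \<le> n \<and> Suc n - i \<le> n" by auto

lemma FF_adjb: assumes g: "Good n B" shows "adjb (FF B (Suc n) x y)"
  unfolding FF_def
  by (intro S.adjointable_sum S.adjointable_comp) (auto dest!: idx intro: GD(1)[OF g])

lemma FF_add1: assumes g: "Good n B" shows "FF B (Suc n) (x + x') y = FF B (Suc n) x y + FF B (Suc n) x' y"
  unfolding FF_def sum.distrib[symmetric]
  by (intro sum.cong refl) (auto dest!: idx simp: lin_add[OF GD(2)[OF g]] comp_add_left)

lemma FF_scC1: assumes g: "Good n B" shows "FF B (Suc n) (scC c x) y = scC c (FF B (Suc n) x y)"
  unfolding FF_def scC_sum_right
  by (intro sum.cong refl) (auto dest!: idx simp: lin_scC[OF GD(2)[OF g]] comp_scC_left)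

lemma FF_add2: assumes g: "Good n B" shows "FF B (Suc n) x (y + y') = FF B (Suc n) x y + FF B (Suc n) x y'"
  unfolding FF_def sum.distrib[symmetric]
  by (intro sum.cong refl) (auto dest!: idx simp: lin_add[OF GD(2)[OF g]] S.comp_add_right[OF GD(1)[OF g]])

lemma FF_scC2: assumes g: "Good n B" shows "FF B (Suc n) x (scC c y) = scC c (FF B (Suc n) x y)"
  unfolding FF_def scC_sum_right
  by (intro sum.cong refl) (auto dest!: idx simp: lin_scC[OF GD(2)[OF g]] S.comp_scC_right[OF GD(1)[OF g]])

lemma FF_star: assumes g: "Good n B" shows "adj (FF B (Suc n) (star y) (star x)) = FF B (Suc n) x y"
proof -
  have "adj (FF B (Suc n) (star y) (star x)) = (\<Sum>i\<in>{1..<Suc n}. adj (B i (star y) \<circ> B (Suc n - i) (star x)))"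
    unfolding FF_def
    by (rule S.adjoint_sum) (auto dest!: idx intro!: S.adjointable_comp GD(1)[OF g])
  also have "\<dots> = (\<Sum>i\<in>{1..<Suc n}. B (Suc n - i) x \<circ> B i y)"
  proof (intro sum.cong refl)
    fix i assume i: "i \<in> {1..<Suc n}"
    then have a: "i \<le> n" "Suc n - i \<le> n" by auto
    show "adj (B i (star y) \<circ> B (Suc n - i) (star x)) = B (Suc n - i) x \<circ> B i y"
      using a
      by (simp add: S.adjoint_comp GD(1)[OF g] GD(4)[OF g] S.adjoint_adjointable S.adjoint_adjoint)
  qed
  also have "\<dots> = (\<Sum>i\<in>{1..<Suc n}. B (Suc n - (Suc n - i)) x \<circ> B (Suc n - i) y)"
    by (rule sum_flip[symmetric, where f="\<lambda>i. B (Suc n - i) x \<circ> B i y"])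
  also have "\<dots> = FF B (Suc n) x y"
    unfolding FF_def by (intro sum.cong refl) auto
  finally show ?thesis .
qed

lemma FF_par: assumes g: "Good n B" shows "Gc (FF B (Suc n) x y) = sg (Suc n) (FF B (Suc n) x y)"
  unfolding FF_def Gc_sum sg_sum
proof (intro sum.cong refl)
  fix i assume i: "i \<in> {1..<Suc n}"
  then have a: "i \<le> n" "Suc n - i \<le> n" "i + (Suc n - i) = Suc n" by auto
  show "Gc (B i x \<circ> B (Suc n - i) y) = sg (Suc n) (B i x \<circ> B (Suc n - i) y)"
    unfolding Gc_comp GD(5)[OF g a(1)] GD(5)[OF g a(2)] sg_comp[OF GD(1)[OF g a(1)]] a(3) ..
qed

lemma FF_2: assumes g: "Good 1 B" shows "FF B 2 x y = D1 x \<circ> D1 y"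
proof -
  have "{1..<2::nat} = {1}" by auto
  then show ?thesis unfolding FF_def using GD1[OF g] by simp
qed

end


context thmctx begin

lemma FF_cocycle:
  assumes g: "Good n B" and n: "1 \<le> n"
  shows "FF B (Suc n) (a * b) c + (FF B (Suc n) a b \<circ> T c) = FF B (Suc n) a (b * c) + (T a \<circ> FF B (Suc n) b c)"
proof -
  define k where "k = Suc n"
  have k1: "1 \<le> k" using k_def by simp
  define W where "W p q r = (if p < k \<and> q < k \<and> r < k then B p a \<circ> B q b \<circ> B r c else 0)" for p q r
  have B0: "B 0 = T" by (rule GD0[OF g])
  have lt: "j < k \<Longrightarrow> j \<le> n" for j using k_def by simp
  have t1_0: "(\<Sum>i\<le>0. W i (0 - i) (k - 0)) = 0" by (simp add: W_def)
  have t1_m: "(\<Sum>i\<le>m. W i (m - i) (k - m)) = B m (a * b) \<circ> B (k - m) c" if m: "m \<in> {1..<k}" for m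
  proof -
    have "(\<Sum>i\<le>m. W i (m - i) (k - m)) = (\<Sum>i\<le>m. B i a \<circ> B (m - i) b \<circ> B (k - m) c)"
      using m by (intro sum.cong refl) (auto simp: W_def)
    also have "\<dots> = (\<Sum>i\<le>m. B i a \<circ> B (m - i) b) \<circ> B (k - m) c" by (simp add: sum_comp_right)
    also have "\<dots> = B m (a * b) \<circ> B (k - m) c" using m by (simp add: GD(3)[OF g lt])
    finally show ?thesis .
  qed
  have t1_k: "(\<Sum>i\<le>k. W i (k - i) (k - k)) = FF B k a b \<circ> T c"
  proof -
    have "(\<Sum>i\<le>k. W i (k - i) (k - k)) = W 0 k 0 + (\<Sum>i\<in>{1..<k}. W i (k - i) 0) + W k 0 0"
      using sum_ends[OF k1, of "\<lambda>i. W i (k - i) 0"] by simp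
    also have "\<dots> = (\<Sum>i\<in>{1..<k}. B i a \<circ> B (k - i) b \<circ> B 0 c)"
      using k1 by (auto simp: W_def intro!: sum.cong)
    also have "\<dots> = FF B k a b \<circ> T c" by (simp add: FF_def sum_comp_right B0)
    finally show ?thesis .
  qed
  have S1: "(\<Sum>m\<le>k. \<Sum>i\<le>m. W i (m - i) (k - m)) = FF B k (a * b) c + (FF B k a b \<circ> T c)"
  proof -
    have "(\<Sum>m\<le>k. \<Sum>i\<le>m. W i (m - i) (k - m)) =
        (\<Sum>i\<le>0. W i (0 - i) (k - 0)) + (\<Sum>m\<in>{1..<k}. \<Sum>i\<le>m. W i (m - i) (k - m)) + (\<Sum>i\<le>k. W i (k - i) (k - k))"
      by (rule sum_ends[OF k1])
    also have "\<dots> = FF B k (a * b) c + (FF B k a b \<circ> T c)"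
      unfolding t1_0 t1_k FF_def by (simp add: t1_m)
    finally show ?thesis .
  qed
  have t2_0: "(\<Sum>i\<le>0. W (k - 0) i (0 - i)) = 0" by (simp add: W_def)
  have t2_m: "(\<Sum>i\<le>m. W (k - m) i (m - i)) = B (k - m) a \<circ> B m (b * c)" if m: "m \<in> {1..<k}" for m
  proof -
    have "(\<Sum>i\<le>m. W (k - m) i (m - i)) = (\<Sum>i\<le>m. B (k - m) a \<circ> (B i b \<circ> B (m - i) c))"
      using m by (intro sum.cong refl) (auto simp: W_def comp_assoc)
    also have "\<dots> = B (k - m) a \<circ> (\<Sum>i\<le>m. B i b \<circ> B (m - i) c)"
      using m by (simp add: S.comp_sum_right[OF GD(1)[OF g lt]])
    also have "\<dots> = B (k - m) a \<circ> B m (b * c)" using m by (simp add: GD(3)[OF g lt])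
    finally show ?thesis .
  qed
  have t2_k: "(\<Sum>i\<le>k. W (k - k) i (k - i)) = T a \<circ> FF B k b c"
  proof -
    have "(\<Sum>i\<le>k. W (k - k) i (k - i)) = W 0 0 k + (\<Sum>i\<in>{1..<k}. W 0 i (k - i)) + W 0 k 0"
      using sum_ends[OF k1, of "\<lambda>i. W 0 i (k - i)"] by simp
    also have "\<dots> = (\<Sum>i\<in>{1..<k}. T a \<circ> (B i b \<circ> B (k - i) c))"
      using k1 by (auto simp: W_def B0 comp_assoc intro!: sum.cong)
    also have "\<dots> = T a \<circ> FF B k b c" by (simp add: FF_def S.comp_sum_right[OF T_adjb])
    finally show ?thesis .
  qed
  have S2: "(\<Sum>m\<le>k. \<Sum>i\<le>m. W (k - m) i (m - i)) = FF B k a (b * c) + (T a \<circ> FF B k b c)"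
  proof -
    have "(\<Sum>m\<le>k. \<Sum>i\<le>m. W (k - m) i (m - i)) =
        (\<Sum>i\<le>0. W (k - 0) i (0 - i)) + (\<Sum>m\<in>{1..<k}. \<Sum>i\<le>m. W (k - m) i (m - i)) + (\<Sum>i\<le>k. W (k - k) i (k - i))"
      by (rule sum_ends[OF k1])
    also have "(\<Sum>m\<in>{1..<k}. \<Sum>i\<le>m. W (k - m) i (m - i)) = (\<Sum>m\<in>{1..<k}. B (k - m) a \<circ> B m (b * c))"
      by (intro sum.cong refl) (rule t2_m)
    also have "\<dots> = (\<Sum>m\<in>{1..<k}. B (k - m) a \<circ> B (k - (k - m)) (b * c))"
      by (intro sum.cong refl) auto
    also have "\<dots> = FF B k a (b * c)"
      unfolding FF_def by (rule sum_flip[where f="\<lambda>i. B i a \<circ> B (k - i) (b * c)"])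
    finally show ?thesis by (simp only: t2_0 t2_k add_0_left)
  qed
  show ?thesis using S1 S2 tri_swap[of W k] unfolding k_def by simp
qed

end


context thmctx begin

lemma Good_SucI:
  assumes g: "Good n B" and n: "1 \<le> n"
    and a: "\<And>x. adjb (B (Suc n) x)" and l: "lin (B (Suc n))"
    and h: "\<And>x y. B (Suc n) (x * y) = (\<Sum>i\<le>Suc n. B i x \<circ> B (Suc n - i) y)"
    and s: "\<And>x. B (Suc n) (star x) = adj (B (Suc n) x)"
    and p: "\<And>x. Gc (B (Suc n) x) = sg (Suc n) (B (Suc n) x)"
    and e: "\<And>x. n = 1 \<Longrightarrow> e00 (B 2 x) = L x"
  shows "Good (Suc n) B"
proof -
  have blk: "(\<forall>x. adjb (B k x)) \<and> lin (B k) \<and>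
      (\<forall>x y. B k (x * y) = (\<Sum>i\<le>k. B i x \<circ> B (k - i) y)) \<and>
      (\<forall>x. B k (star x) = adj (B k x)) \<and> (\<forall>x. Gc (B k x) = sg k (B k x))" if k: "k \<le> Suc n" for k
  proof (cases "k = Suc n")
    case True then show ?thesis using a l h s p by simp
  next
    case False then have "k \<le> n" using k by simp
    then show ?thesis using GD[OF g] by blast
  qed
  have e2: "2 \<le> Suc n \<longrightarrow> (\<forall>x. e00 (B 2 x) = L x)"
  proof (intro impI allI)
    fix x assume "2 \<le> Suc n"
    show "e00 (B 2 x) = L x"
    proof (cases "n = 1")
      case True then show ?thesis by (rule e)
    next
      case False then have "2 \<le> n" using n by simp
      then show ?thesis by (rule GD2[OF g])
    qed
  qed
  show ?thesis unfolding Good_def using blk GD0[OF g] GD1[OF g] e2 by blast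
qed

lemma step:
  assumes g: "Good n B" and n: "1 \<le> n"
  shows "\<exists>b. Good (Suc n) (B(Suc n := b))"
proof -
  define k where "k = Suc n"
  define F where "F = FF B k"
  define f where "f x y = - F x y" for x y
  have fa: "\<And>x y. adjb (F x y)" unfolding F_def k_def by (rule FF_adjb[OF g])
  have hyp: "(\<forall>x y. f x y \<in> EL ip) \<and> (\<forall>y. clinearE (\<lambda>x. f x y)) \<and> (\<forall>x. clinearE (f x)) \<and>
        (\<forall>a1 a2 a3. hoch_b2 \<pi> f a1 a2 a3 = ezero)"
  proof (intro conjI allI)
    fix x y show "f x y \<in> EL ip" unfolding f_def EL_iff by (intro S.adjointable_uminus fa)
  next
    fix y show "clinearE (\<lambda>x. f x y)"
      unfolding clinearE_lin lin_def f_def F_def k_def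
      by (simp add: FF_add1[OF g] FF_scC1[OF g] scC_minus_right)
  next
    fix x show "clinearE (f x)"
      unfolding clinearE_lin lin_def f_def F_def k_def
      by (simp add: FF_add2[OF g] FF_scC2[OF g] scC_minus_right)
  next
    fix a1 a2 a3
    have c: "F (a1 * a2) a3 + (F a1 a2 \<circ> T a3) = F a1 (a2 * a3) + (T a1 \<circ> F a2 a3)"
      unfolding F_def k_def by (rule FF_cocycle[OF g n])
    show "hoch_b2 \<pi> f a1 a2 a3 = ezero"
      unfolding hoch_b2_def ediff_eq eadd_eq ezero_eq lact_def ract_E_def f_def
      using c by (simp add: S.comp_uminus_right[OF T_adjb] comp_uminus_left algebra_simps)
  qed
  obtain g0 where g0a: "\<And>x. g0 x \<in> EL ip" and g0l: "clinearE g0"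
    and g0h: "\<And>a1 a2. f a1 a2 = hoch_b1 \<pi> g0 a1 a2"
    using H2 hyp unfolding H2_vanishes_def by blast
  have s0: "Sol F g0"
    unfolding Sol_def
  proof (intro conjI allI)
    fix x show "adjb (g0 x)" using g0a EL_iff by blast
  next
    show "lin g0" using g0l clinearE_lin by blast
  next
    fix x y
    have "- F x y = (T x \<circ> g0 y) - g0 (x * y) + (g0 x \<circ> T y)"
      using g0h[of x y] unfolding f_def hoch_b1_def eadd_eq ediff_eq lact_def ract_E_def .
    then show "g0 (x * y) = (T x \<circ> g0 y) + (g0 x \<circ> T y) + F x y" by (rule ag1)
  qed
  have g0a': "\<And>x. adjb (g0 x)" using s0 unfolding Sol_def by blast
  have g0l': "lin g0" using s0 unfolding Sol_def by blast
  \<comment> \<open>correction of the (0,0) entry at order 2\<close>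
  define g1 where "g1 = (if n = 1 then (\<lambda>x. g0 x + Cn (L x - e00 (g0 x))) else g0)"
  have s1: "Sol F g1"
  proof (cases "n = 1")
    case False then show ?thesis using s0 by (simp add: g1_def)
  next
    case True
    have g1': "Good 1 B" using g True by simp
    have F2: "F x y = D1 x \<circ> D1 y" for x y unfolding F_def k_def True using FF_2[OF g1', of x y] by (simp add: numeral_2_eq_2)
    have "Sol F (\<lambda>x. g0 x + Cn (L x - e00 (g0 x)))"
    proof (rule Sol_corr[OF s0])
      fix x y
      show "L (x + y) - e00 (g0 (x + y)) = (L x - e00 (g0 x)) + (L y - e00 (g0 y))"
        by (simp add: L_add lin_add[OF g0l'] e00_add algebra_simps)
      fix c
      show "L (scC c x) - e00 (g0 (scC c x)) = scC c (L x - e00 (g0 x))"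
        by (simp add: L_scC lin_scC[OF g0l'] e00_scC scC_diff_right)
    next
      fix x y
      have h: "g0 (x * y) = (T x \<circ> g0 y) + (g0 x \<circ> T y) + F x y" using s0 unfolding Sol_def by blast
      have e: "e00 (g0 (x * y)) = x * e00 (g0 y) + e00 (g0 x) * y + ip (\<delta> (star x)) (\<delta> y)"
        unfolding h by (simp add: e00_add e00_T_left e00_T_right[OF g0a'] F2 e00_D1D1)
      have l: "L (x * y) = x * L y + L x * y + ip (\<delta> (star x)) (\<delta> y)"
        using L_mult[of x y] by (simp add: algebra_simps)
      show "L (x * y) - e00 (g0 (x * y)) = x * (L y - e00 (g0 y)) + (L x - e00 (g0 x)) * y"
        unfolding e l by (simp add: algebra_simps)
    qed
    then show ?thesis using True by (simp add: g1_def)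
  qed
  have e1: "n = 1 \<Longrightarrow> e00 (g1 x) = L x" for x by (simp add: g1_def e00_add e00_Cn)
  have g1a: "\<And>x. adjb (g1 x)" using s1 unfolding Sol_def by blast
  \<comment> \<open>symmetrisation for the involution\<close>
  define g2 where "g2 x = scC (1/2) (g1 x + adj (g1 (star x)))" for x
  have s2: "Sol F g2" unfolding g2_def
    by (rule Sol_avg[OF s1 Sol_star[OF s1 fa]]) (simp add: F_def k_def FF_star[OF g])
  have g2a: "\<And>x. adjb (g2 x)" using s2 unfolding Sol_def by blast
  have st2: "g2 (star x) = adj (g2 x)" for x
    by (simp add: g2_def star_star S.adjoint_scC S.adjointable_add g1a S.adjoint_adjointable
        S.adjoint_add S.adjoint_adjoint add.commute)
  have e2: "n = 1 \<Longrightarrow> e00 (g2 x) = L x" for x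
    by (simp add: g2_def e00_scC e00_add e00_adjoint[OF g1a] e1 L_star star_star scC_half)
  \<comment> \<open>symmetrisation for the grading\<close>
  define g3 where "g3 x = scC (1/2) (g2 x + sg k (Gc (g2 x)))" for x
  have s3: "Sol F g3" unfolding g3_def
    by (rule Sol_avg[OF s2 Sol_par[OF s2]]) (simp add: F_def k_def FF_par[OF g])
  have g3a: "\<And>x. adjb (g3 x)" using s3 unfolding Sol_def by blast
  have g3l: "lin g3" using s3 unfolding Sol_def by blast
  have st3: "g3 (star x) = adj (g3 x)" for x
    by (simp add: g3_def st2 S.adjoint_scC S.adjointable_add g2a sg_adjb Gc_adjb S.adjoint_add
        sg_adjoint Gc_adjoint)
  have p3: "Gc (g3 x) = sg k (g3 x)" for x
    by (simp add: g3_def Gc_scC Gc_add Gc_sg Gc_Gc sg_scC sg_add sg_sg add.commute)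
  have e3: "n = 1 \<Longrightarrow> e00 (g3 x) = L x" for x
    by (simp add: g3_def k_def e00_scC e00_add sg_def e00_Gc e2 scC_half)
  have h3: "g3 (x * y) = (T x \<circ> g3 y) + (g3 x \<circ> T y) + F x y" for x y
    using s3 unfolding Sol_def by blast
  define B' where "B' = B(Suc n := g3)"
  have eq: "\<And>j. j \<le> n \<Longrightarrow> B' j = B j" unfolding B'_def by simp
  have gB': "Good n B'" by (rule Good_cong[OF g n eq])
  have B'k: "B' (Suc n) = g3" unfolding B'_def by simp
  have "Good (Suc n) B'"
  proof (rule Good_SucI[OF gB' n])
    fix x show "adjb (B' (Suc n) x)" unfolding B'k by (rule g3a)
  next
    show "lin (B' (Suc n))" unfolding B'k by (rule g3l)
  next
    fix x show "B' (Suc n) (star x) = adj (B' (Suc n) x)" unfolding B'k by (rule st3)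
  next
    fix x show "Gc (B' (Suc n) x) = sg (Suc n) (B' (Suc n) x)" unfolding B'k using p3 k_def by simp
  next
    fix x assume n1: "n = 1" then show "e00 (B' 2 x) = L x" using B'k e3[OF n1] by (simp add: numeral_2_eq_2)
  next
    fix x y
    have "(\<Sum>i\<le>Suc n. B' i x \<circ> B' (Suc n - i) y) =
        (B' 0 x \<circ> B' (Suc n) y) + (\<Sum>i\<in>{1..<Suc n}. B' i x \<circ> B' (Suc n - i) y) + (B' (Suc n) x \<circ> B' 0 y)"
      using sum_ends[of "Suc n" "\<lambda>i. B' i x \<circ> B' (Suc n - i) y"] by simp
    also have "(\<Sum>i\<in>{1..<Suc n}. B' i x \<circ> B' (Suc n - i) y) = F x y"
      unfolding F_def FF_def k_def by (intro sum.cong refl) (auto simp: eq)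
    also have "B' 0 = T" using eq[of 0] GD0[OF g] by simp
    finally have S: "(\<Sum>i\<le>Suc n. B' i x \<circ> B' (Suc n - i) y) =
        (T x \<circ> B' (Suc n) y) + F x y + (B' (Suc n) x \<circ> T y)" .
    have H: "B' (Suc n) (x * y) = (T x \<circ> B' (Suc n) y) + (B' (Suc n) x \<circ> T y) + F x y"
      unfolding B'k by (rule h3)
    show "B' (Suc n) (x * y) = (\<Sum>i\<le>Suc n. B' i x \<circ> B' (Suc n - i) y)"
      unfolding S H by (simp only: add_ac)
  qed
  then show ?thesis unfolding B'_def by blast
qed

end


context thmctx begin

definition extd :: "nat \<Rightarrow> (nat \<Rightarrow> 'a \<Rightarrow> ('a, 'm) op) \<Rightarrow> (nat \<Rightarrow> 'a \<Rightarrow> ('a, 'm) op)" where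
  "extd n B = B(Suc n := (SOME b. Good (Suc n) (B(Suc n := b))))"

primrec sq :: "nat \<Rightarrow> (nat \<Rightarrow> 'a \<Rightarrow> ('a, 'm) op)" where
  "sq 0 = B1"
| "sq (Suc m) = extd (Suc m) (sq m)"

lemma sq_good: "Good (Suc m) (sq m)"
proof (induction m)
  case 0 then show ?case using Good_base by simp
next
  case (Suc m)
  have "\<exists>b. Good (Suc (Suc m)) ((sq m)(Suc (Suc m) := b))" by (rule step[OF Suc]) simp
  then have "Good (Suc (Suc m)) ((sq m)(Suc (Suc m) := (SOME b. Good (Suc (Suc m)) ((sq m)(Suc (Suc m) := b)))))"
    by (rule someI_ex)
  then show ?case by (simp only: sq.simps extd_def)
qed

lemma sq_stab: "j \<le> Suc m \<Longrightarrow> sq (m + d) j = sq m j"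
  by (induction d) (auto simp: extd_def)

definition BB :: "nat \<Rightarrow> 'a \<Rightarrow> ('a, 'm) op" where "BB j = sq j j"

lemma sq_BB: "j \<le> Suc m \<Longrightarrow> sq m j = BB j"
proof (cases "j \<le> m")
  case True
  then have "sq (j + (m - j)) j = sq j j" by (intro sq_stab) simp
  then show ?thesis using True by (simp add: BB_def)
next
  case False
  assume "j \<le> Suc m"
  with False have j: "j = Suc m" by simp
  have "sq (m + 1) (Suc m) = sq m (Suc m)" by (rule sq_stab) simp
  then show ?thesis using j by (simp add: BB_def)
qed

lemma BB_good: "Good (Suc m) BB"
  by (rule Good_cong[OF sq_good]) (simp_all add: sq_BB)

lemma e00_lin: "e00 (X + Y) = e00 X + e00 Y" "e00 (scC c X) = scC c (e00 X)"
  by (simp_all add: e00_def)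
lemma e10_lin: "e10 (X + Y) = e10 X + e10 Y" "e10 (scC c X) = scC c (e10 X)"
  by (simp_all add: e10_def)
lemma e01_lin: "e01 (X + Y) \<eta> = e01 X \<eta> + e01 Y \<eta>" "e01 (scC c X) \<eta> = scC c (e01 X \<eta>)"
  by (simp_all add: e01_def)
lemma e11_lin: "e11 (X + Y) \<eta> = e11 X \<eta> + e11 Y \<eta>" "e11 (scC c X) \<eta> = scC c (e11 X \<eta>)"
  by (simp_all add: e11_def)

lemma main:
  shows "\<exists>(\<beta> :: 'a \<Rightarrow> nat \<Rightarrow> ('a, 'm) op)
           (\<theta>00 :: nat \<Rightarrow> 'a \<Rightarrow> 'a) (\<theta>10 :: nat \<Rightarrow> 'a \<Rightarrow> 'm)
           (\<theta>01 :: nat \<Rightarrow> 'a \<Rightarrow> 'm \<Rightarrow> 'a) (\<theta>11 :: nat \<Rightarrow> 'a \<Rightarrow> 'm \<Rightarrow> 'm).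
     (\<forall>x k. \<beta> x k \<in> EL ip) \<and>
     (\<forall>x y. \<beta> (x * y) = ps_mult (\<beta> x) (\<beta> y)) \<and>
     (\<forall>x. \<beta> (star x) = ps_star ip (\<beta> x)) \<and>
     (\<forall>n. clinear (\<theta>00 n) \<and> clinear (\<theta>10 n) \<and> clinear_fun (\<theta>01 n) \<and> clinear_fun (\<theta>11 n)) \<and>
     (\<forall>x n. e00 (\<beta> x (2 * n)) = \<theta>00 n x \<and> e00 (\<beta> x (2 * n + 1)) = 0) \<and>
     (\<forall>x n. e10 (\<beta> x (2 * n + 1)) = \<theta>10 (n + 1) x \<and> e10 (\<beta> x (2 * n)) = 0) \<and>
     (\<forall>x n. e01 (\<beta> x (2 * n + 1)) = \<theta>01 (n + 1) x \<and> e01 (\<beta> x (2 * n)) = (\<lambda>_. 0)) \<and>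
     (\<forall>x n. e11 (\<beta> x (2 * n)) = \<theta>11 (n + 1) x \<and> e11 (\<beta> x (2 * n + 1)) = (\<lambda>_. 0)) \<and>
     (\<forall>x. \<theta>00 0 x = x) \<and> \<theta>00 1 = L \<and> \<theta>10 1 = \<delta> \<and>
     (\<forall>x. \<theta>01 1 x = (\<lambda>\<eta>. ip (\<delta> (star x)) \<eta>)) \<and> \<theta>11 1 = \<pi>"
proof -
  define \<beta> where "\<beta> x k = BB k x" for x k
  define \<theta>00 where "\<theta>00 n x = e00 (BB (2 * n) x)" for n x
  define \<theta>10 where "\<theta>10 n x = e10 (BB (2 * n - 1) x)" for n x
  define \<theta>01 where "\<theta>01 n x = e01 (BB (2 * n - 1) x)" for n x
  define \<theta>11 where "\<theta>11 n x = e11 (BB (2 * n - 2) x)" for n x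
  have G: "\<And>k. Good (Suc k) BB" by (rule BB_good)
  have ga: "adjb (BB k x)" for k x using GD(1)[OF G[of k]] by simp
  have gl: "lin (BB k)" for k using GD(2)[OF G[of k]] by simp
  have gh: "BB k (x * y) = (\<Sum>i\<le>k. BB i x \<circ> BB (k - i) y)" for k x y using GD(3)[OF G[of k]] by simp
  have gs: "BB k (star x) = adj (BB k x)" for k x using GD(4)[OF G[of k]] by simp
  have gp: "Gc (BB k x) = sg k (BB k x)" for k x using GD(5)[OF G[of k]] by simp
  have B0: "BB 0 = T" by (rule GD0[OF G[of 0]])
  have B1': "BB 1 = D1" by (rule GD1[OF G[of 0]])
  have B2: "e00 (BB 2 x) = L x" for x by (rule GD2[OF G[of 1]]) simp
  have even_p: "Gc (BB (2 * n) x) = BB (2 * n) x" for n x using gp[of "2 * n" x] by (simp add: sg_def)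
  have odd_p: "Gc (BB (2 * n + 1) x) = - BB (2 * n + 1) x" for n x using gp[of "2 * n + 1" x] by (simp add: sg_def)
  show ?thesis
  proof (intro exI[of _ \<beta>] exI[of _ \<theta>00] exI[of _ \<theta>10] exI[of _ \<theta>01] exI[of _ \<theta>11] conjI allI)
    fix x k show "\<beta> x k \<in> EL ip" unfolding \<beta>_def EL_iff by (rule ga)
  next
    fix x y show "\<beta> (x * y) = ps_mult (\<beta> x) (\<beta> y)"
      unfolding \<beta>_def ps_mult_def
      by (simp add: fun_eq_iff gh sum_fun_apply fst_sum snd_sum prod_eq_iff)
  next
    fix x show "\<beta> (star x) = ps_star ip (\<beta> x)"
      unfolding \<beta>_def ps_star_def adjE_eq by (simp add: fun_eq_iff gs)
  next
    fix n show "clinear (\<theta>00 n)" unfolding clinear_def \<theta>00_def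
      by (simp add: lin_add[OF gl] lin_scC[OF gl] e00_lin)
  next
    fix n show "clinear (\<theta>10 n)" unfolding clinear_def \<theta>10_def
      by (simp add: lin_add[OF gl] lin_scC[OF gl] e10_lin)
  next
    fix n show "clinear_fun (\<theta>01 n)" unfolding clinear_fun_def clinear_def \<theta>01_def
      by (simp add: lin_add[OF gl] lin_scC[OF gl] e01_lin)
  next
    fix n show "clinear_fun (\<theta>11 n)" unfolding clinear_fun_def clinear_def \<theta>11_def
      by (simp add: lin_add[OF gl] lin_scC[OF gl] e11_lin)
  next
    fix x n show "e00 (\<beta> x (2 * n)) = \<theta>00 n x" unfolding \<beta>_def \<theta>00_def ..
  next
    fix x n show "e00 (\<beta> x (2 * n + 1)) = 0" unfolding \<beta>_def by (rule par_odd(1)[OF ga odd_p])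
  next
    fix x n show "e10 (\<beta> x (2 * n + 1)) = \<theta>10 (n + 1) x" unfolding \<beta>_def \<theta>10_def by simp
  next
    fix x n show "e10 (\<beta> x (2 * n)) = 0" unfolding \<beta>_def by (rule par_even(1)[OF ga even_p])
  next
    fix x n show "e01 (\<beta> x (2 * n + 1)) = \<theta>01 (n + 1) x" unfolding \<beta>_def \<theta>01_def by simp
  next
    fix x n show "e01 (\<beta> x (2 * n)) = (\<lambda>_. 0)" unfolding \<beta>_def by (rule par_even(2)[OF ga even_p])
  next
    fix x n show "e11 (\<beta> x (2 * n)) = \<theta>11 (n + 1) x" unfolding \<beta>_def \<theta>11_def by simp
  next
    fix x n show "e11 (\<beta> x (2 * n + 1)) = (\<lambda>_. 0)" unfolding \<beta>_def by (rule par_odd(2)[OF ga odd_p])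
  next
    fix x show "\<theta>00 0 x = x" unfolding \<theta>00_def by (simp add: B0 e00_def tpi_def)
  next
    show "\<theta>00 1 = L" unfolding \<theta>00_def by (simp add: fun_eq_iff B2)
  next
    show "\<theta>10 1 = \<delta>" unfolding \<theta>10_def by (simp add: fun_eq_iff B1'[unfolded One_nat_def] e10_def D1_def)
  next
    fix x show "\<theta>01 1 x = (\<lambda>\<eta>. ip (\<delta> (star x)) \<eta>)" unfolding \<theta>01_def by (simp add: fun_eq_iff B1'[unfolded One_nat_def] e01_def D1_def)
  next
    show "\<theta>11 1 = \<pi>" unfolding \<theta>11_def by (simp add: fun_eq_iff B0 e11_def tpi_def)
  qed
qed

end

theorem theorem3p1:
  fixes rep :: "'a::star_alg \<Rightarrow> 'h::chilbert \<Rightarrow> 'h"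
    and L :: "'a \<Rightarrow> 'a"
    and ract :: "'m::cvec \<Rightarrow> 'a \<Rightarrow> 'm"
    and ip :: "'m \<Rightarrow> 'm \<Rightarrow> 'a"
    and \<pi> :: "'a \<Rightarrow> 'm \<Rightarrow> 'm"
    and \<delta> :: "'a \<Rightarrow> 'm"
  assumes A: "unital_star_subalg_of_Bh rep"
    and L_lin: "clinear L"
    and L_ccp: "ccp rep L"
    and L_one: "L 1 = 0"
    and canon: "canonical_triple rep L ract ip \<pi> \<delta>"
    and H2: "H2_vanishes ip \<pi>"
  shows "\<exists>(\<beta> :: 'a \<Rightarrow> nat \<Rightarrow> ('a, 'm) op)
           (\<theta>00 :: nat \<Rightarrow> 'a \<Rightarrow> 'a) (\<theta>10 :: nat \<Rightarrow> 'a \<Rightarrow> 'm)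
           (\<theta>01 :: nat \<Rightarrow> 'a \<Rightarrow> 'm \<Rightarrow> 'a) (\<theta>11 :: nat \<Rightarrow> 'a \<Rightarrow> 'm \<Rightarrow> 'm).
     \<comment> \<open>\<beta> : A \<rightarrow> E_L[[t]] is a *-homomorphism\<close>
     (\<forall>x k. \<beta> x k \<in> EL ip) \<and>
     (\<forall>x y. \<beta> (x * y) = ps_mult (\<beta> x) (\<beta> y)) \<and>
     (\<forall>x. \<beta> (star x) = ps_star ip (\<beta> x)) \<and>
     \<comment> \<open>the theta's are linear maps on A\<close>
     (\<forall>n. clinear (\<theta>00 n) \<and> clinear (\<theta>10 n) \<and> clinear_fun (\<theta>01 n) \<and> clinear_fun (\<theta>11 n)) \<and>
     \<comment> \<open>beta_00(h) = sum_{n\<ge>0} h^n theta00^(n)\<close>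
     (\<forall>x n. e00 (\<beta> x (2 * n)) = \<theta>00 n x \<and> e00 (\<beta> x (2 * n + 1)) = 0) \<and>
     \<comment> \<open>beta_10(h) = sum_{n\<ge>1} h^((2n-1)/2) theta10^(n)\<close>
     (\<forall>x n. e10 (\<beta> x (2 * n + 1)) = \<theta>10 (n + 1) x \<and> e10 (\<beta> x (2 * n)) = 0) \<and>
     \<comment> \<open>beta_01(h) = sum_{n\<ge>1} h^((2n-1)/2) theta01^(n)\<close>
     (\<forall>x n. e01 (\<beta> x (2 * n + 1)) = \<theta>01 (n + 1) x \<and> e01 (\<beta> x (2 * n)) = (\<lambda>_. 0)) \<and>
     \<comment> \<open>beta_11(h) = sum_{n\<ge>1} h^(n-1) theta11^(n)\<close>
     (\<forall>x n. e11 (\<beta> x (2 * n)) = \<theta>11 (n + 1) x \<and> e11 (\<beta> x (2 * n + 1)) = (\<lambda>_. 0)) \<and>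
     \<comment> \<open>leading terms\<close>
     (\<forall>x. \<theta>00 0 x = x) \<and> \<theta>00 1 = L \<and> \<theta>10 1 = \<delta> \<and>
     (\<forall>x. \<theta>01 1 x = (\<lambda>\<eta>. ip (\<delta> (star x)) \<eta>)) \<and> \<theta>11 1 = \<pi>"
proof -
  have Ls: "\<And>x. L (star x) = star (L x)" using L_ccp unfolding ccp_def by blast
  interpret thmctx rep L ract ip \<pi> \<delta>
    by (rule thmctx.intro[OF A L_lin Ls canon H2])
  show ?thesis by (rule main)
qed



end
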